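(* Let $d\ge5$. Let $X^1,X^2$ be independent simple random walks on $\mathbb{Z}^d$ started at the origin, and let $X=(X(t))_{t\in\mathbb{Z}}$ be the two-sided walk $X(t)=X^1(t)$ for $t\ge0$ and $X(t)=X^2(-t)$ for $t\le0$. There exist constants $\xi=\xi(d)\in(0,\infty)$ and $C=C(d)\in(0,\infty)$ such that for every integer $N\ge2$, \[ \mathbf P\big(\exists\, j\in\{1,\dots,N\}:\ X(-\infty,j]\cap X[j+1,\infty)=\emptyset\big)\ge 1-C(\log N)^{\xi}N^{(4-d)/2}. \]
   Context: $X[a,b]$ (with $a$ possibly $-\infty$, $b$ possibly $\infty$) denotes the set of vertices visited by $X$ at times $t\in[a,b]\cap\mathbb{Z}$. *)

theory Defs
  imports "HOL-Probability.Probability"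
begin

text \<open>Lattice points of Z^d are modelled as int^'d, with d = CARD('d).\<close>

definition unit_steps :: "(int ^ 'd) set" where
  "unit_steps = {v. \<exists>k. \<exists>s\<in>{-1, 1}. v = (\<chi> i. if i = k then s else 0)}"

definition srw_step :: "(int ^ 'd) measure" where
  "srw_step = measure_pmf (pmf_of_set unit_steps)"

definition step_space :: "(nat \<Rightarrow> int ^ 'd) measure" where
  "step_space = (\<Pi>\<^sub>M i\<in>(UNIV :: nat set). srw_step)"

definition walk :: "(nat \<Rightarrow> int ^ 'd) \<Rightarrow> nat \<Rightarrow> int ^ 'd" where
  "walk s n = (\<Sum>i<n. s i)"

definition two_walk_space :: "((nat \<Rightarrow> int ^ 'd) \<times> (nat \<Rightarrow> int ^ 'd)) measure" where
  "two_walk_space = step_space \<Otimes>\<^sub>M step_space"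

definition two_sided :: "(nat \<Rightarrow> int ^ 'd) \<times> (nat \<Rightarrow> int ^ 'd) \<Rightarrow> int \<Rightarrow> int ^ 'd" where
  "two_sided \<omega> t = (if t \<ge> 0 then walk (fst \<omega>) (nat t) else walk (snd \<omega>) (nat (- t)))"

end

theory Submission
  imports Defs
begin

definition dep :: "'i set \<Rightarrow> (('i \<Rightarrow> 'a) \<Rightarrow> bool) \<Rightarrow> bool" where
  "dep J P \<longleftrightarrow> (\<forall>f g. (\<forall>x\<in>J. f x = g x) \<longrightarrow> P f = P g)"

lemma depD: "dep J P \<Longrightarrow> (\<And>x. x\<in>J \<Longrightarrow> f x = g x) \<Longrightarrow> P f = P g"
  unfolding dep_def by blast

lemma depI:
  assumes "\<And>f g. (\<And>x. x\<in>J \<Longrightarrow> f x = g x) \<Longrightarrow> P f = P g" shows "dep J P"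
  unfolding dep_def using assms by blast

lemma dep_mono: "dep A P \<Longrightarrow> A \<subseteq> B \<Longrightarrow> dep B P"
  unfolding dep_def by blast

lemma prob_Pi_pmf_dflt:
  assumes "finite J" "dep J P"
  shows "measure_pmf.prob (Pi_pmf J d1 p) {f. P f} = measure_pmf.prob (Pi_pmf J d2 p) {f. P f}"
proof -
  have "Pi_pmf J d2 p = map_pmf (\<lambda>f x. if x \<in> J then f x else d2) (Pi_pmf J d1 p)"
    using Pi_pmf_default_swap[OF assms(1)] by metis
  then have "measure_pmf.prob (Pi_pmf J d2 p) {f. P f} =
     measure_pmf.prob (Pi_pmf J d1 p) ((\<lambda>f x. if x \<in> J then f x else d2) -` {f. P f})"
    by simp
  also have "(\<lambda>f x. if x \<in> J then f x else d2) -` {f. P f} = {f. P f}"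
  proof -
    have "P (\<lambda>x. if x \<in> J then f x else d2) = P f" for f
      by (rule depD[OF assms(2)]) auto
    then show ?thesis by auto
  qed
  finally show ?thesis by simp
qed

lemma prob_pair_pmf_times:
  "measure_pmf.prob (pair_pmf M N) (X \<times> Y) = measure_pmf.prob M X * measure_pmf.prob N Y"
proof -
  have "measure_pmf.prob (pair_pmf M N) (X \<times> Y) =
        measure_pmf.prob (pair_pmf M N) ((X \<times> Y) \<inter> set_pmf (pair_pmf M N))"
    by (rule measure_Int_set_pmf[symmetric])
  also have "(X \<times> Y) \<inter> set_pmf (pair_pmf M N) = (X \<inter> set_pmf M) \<times> (Y \<inter> set_pmf N)"
    by auto
  also have "measure_pmf.prob (pair_pmf M N) \<dots> =
       measure_pmf.prob M (X \<inter> set_pmf M) * measure_pmf.prob N (Y \<inter> set_pmf N)"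
    by (rule measure_pmf_prob_product) auto
  finally show ?thesis by (simp add: measure_Int_set_pmf)
qed

lemma prob_Pi_pmf_indep:
  assumes "finite A" "finite B" "A \<inter> B = {}" "dep A P" "dep B Q"
  shows "measure_pmf.prob (Pi_pmf (A \<union> B) d p) {f. P f \<and> Q f} =
         measure_pmf.prob (Pi_pmf A d p) {f. P f} * measure_pmf.prob (Pi_pmf B d p) {f. Q f}"
proof -
  let ?h = "\<lambda>(f,g) x. if x \<in> A then f x else g x"
  have "measure_pmf.prob (Pi_pmf (A \<union> B) d p) {f. P f \<and> Q f} =
        measure_pmf.prob (pair_pmf (Pi_pmf A d p) (Pi_pmf B d p)) (?h -` {f. P f \<and> Q f})"
    by (simp add: Pi_pmf_union[OF assms(1-3)])
  also have "?h -` {f. P f \<and> Q f} = {f. P f} \<times> {g. Q g}"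
  proof -
    have "P (?h (f,g)) = P f" for f g by (rule depD[OF assms(4)]) auto
    moreover have "Q (?h (f,g)) = Q g" for f g by (rule depD[OF assms(5)]) (use assms(3) in auto)
    ultimately show ?thesis by auto
  qed
  finally show ?thesis by (simp add: prob_pair_pmf_times)
qed

lemma prob_Pi_pmf_subset:
  assumes "finite B" "A \<subseteq> B" "dep A P"
  shows "measure_pmf.prob (Pi_pmf B d p) {f. P f} = measure_pmf.prob (Pi_pmf A d p) {f. P f}"
proof -
  have fa: "finite A" using assms finite_subset by blast
  have "B = A \<union> (B - A)" using assms by auto
  then have "measure_pmf.prob (Pi_pmf B d p) {f. P f} =
     measure_pmf.prob (Pi_pmf (A \<union> (B - A)) d p) {f. P f \<and> True}" by simp
  also have "\<dots> = measure_pmf.prob (Pi_pmf A d p) {f. P f} * measure_pmf.prob (Pi_pmf (B - A) d p) {f. True}"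
    by (rule prob_Pi_pmf_indep) (use assms fa in \<open>auto simp: dep_def\<close>)
  finally show ?thesis by simp
qed

lemma dep_Ball:
  fixes A :: "'j \<Rightarrow> 'i set" and P :: "'j \<Rightarrow> ('i \<Rightarrow> 'v) \<Rightarrow> bool"
  assumes "\<And>j. j \<in> I \<Longrightarrow> dep (A j) (P j)"
  shows "dep (\<Union>j\<in>I. A j) (\<lambda>f. \<forall>j\<in>I. P j f)"
  unfolding dep_def
proof (intro allI impI)
  fix f g :: "'i \<Rightarrow> 'v" assume h: "\<forall>x\<in>\<Union> (A ` I). f x = g x"
  have "P j f = P j g" if "j \<in> I" for j
    using depD[OF assms[OF that], of f g] h that by auto
  then show "(\<forall>j\<in>I. P j f) = (\<forall>j\<in>I. P j g)" by auto
qed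

lemma prob_Pi_pmf_indep_family:
  assumes "finite I" "\<And>i. i\<in>I \<Longrightarrow> finite (A i)" "disjoint_family_on A I"
    "\<And>i. i\<in>I \<Longrightarrow> dep (A i) (P i)"
  shows "measure_pmf.prob (Pi_pmf (\<Union>i\<in>I. A i) d p) {f. \<forall>i\<in>I. P i f} =
         (\<Prod>i\<in>I. measure_pmf.prob (Pi_pmf (A i) d p) {f. P i f})"
  using assms
proof (induction I rule: finite_induct)
  case empty
  then show ?case by simp
next
  case (insert i I)
  have disj: "disjoint_family_on A I" using insert.prems(2)
    by (auto simp: disjoint_family_on_def)
  have "(\<Union>j\<in>insert i I. A j) = A i \<union> (\<Union>j\<in>I. A j)" by simp
  moreover have "{f. \<forall>j\<in>insert i I. P j f} = {f. P i f \<and> (\<forall>j\<in>I. P j f)}" by auto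
  ultimately have "measure_pmf.prob (Pi_pmf (\<Union>j\<in>insert i I. A j) d p) {f. \<forall>j\<in>insert i I. P j f}
     = measure_pmf.prob (Pi_pmf (A i \<union> (\<Union>j\<in>I. A j)) d p) {f. P i f \<and> (\<forall>j\<in>I. P j f)}"
    by simp
  also have "\<dots> = measure_pmf.prob (Pi_pmf (A i) d p) {f. P i f} *
       measure_pmf.prob (Pi_pmf (\<Union>j\<in>I. A j) d p) {f. \<forall>j\<in>I. P j f}"
  proof (rule prob_Pi_pmf_indep)
    show "A i \<inter> \<Union> (A ` I) = {}"
      using insert.prems(2) insert.hyps(2) by (fastforce simp: disjoint_family_on_def)
    show "dep (\<Union> (A ` I)) (\<lambda>f. \<forall>j\<in>I. P j f)"
      by (rule dep_Ball) (use insert.prems(3) in auto)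
  qed (use insert in auto)
  also have "\<dots> = (\<Prod>j\<in>insert i I. measure_pmf.prob (Pi_pmf (A j) d p) {f. P j f})"
    using insert disj by simp
  finally show ?case .
qed

section \<open>Central binomial coefficient\<close>

declare binomial_Suc_Suc[simp del]

lemma central_binom_rec:
  "(2*k+2 choose (k+1)) * (k+1)^2 = (2*k+1)*(2*k+2) * (2*k choose k)"
proof -
  have a: "Suc (2*k+1) * ((2*k+1) choose k) = (Suc (2*k+1) choose Suc k) * Suc k"
    by (rule Suc_times_binomial_eq)
  have b: "((2*k+1) - k) * ((2*k+1) choose k) = (2*k+1) * ((2*k+1) - 1 choose k)"
    by (rule binomial_absorb_comp)
  have b': "(k+1) * ((2*k+1) choose k) = (2*k+1) * (2*k choose k)"
    using b by (simp add: Suc_diff_le)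
  have a': "(2*k+2 choose (k+1)) * (k+1) = (2*k+2) * ((2*k+1) choose k)"
    using a by simp
  have "(2*k+2 choose (k+1)) * (k+1)^2 = ((2*k+2 choose (k+1)) * (k+1)) * (k+1)"
    by (metis mult.assoc power2_eq_square)
  also have "\<dots> = (2*k+2) * ((k+1) * ((2*k+1) choose k))"
    unfolding a' by (metis mult.assoc mult.commute)
  also have "\<dots> = (2*k+1)*(2*k+2) * (2*k choose k)"
    unfolding b' by (metis mult.assoc mult.commute)
  finally show ?thesis .
qed

lemma frac_aux1: fixes K q x::real assumes "K \<ge> 0" "q > 0"
  shows "((2*K+1)*2*x/(K+1))/(4*q) = x/q*((2*K+1)/(2*K+2))"
proof -
  have n: "(K+1)*(4*q) \<noteq> 0" "q*(2*K+2) \<noteq> 0" using assms by auto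
  have "((2*K+1)*2*x/(K+1))/(4*q) = ((2*K+1)*2*x)/((K+1)*(4*q))" by simp
  also have "\<dots> = (x*(2*K+1))/(q*(2*K+2))"
    by (subst frac_eq_eq[OF n]) (simp add: algebra_simps)
  also have "\<dots> = x/q*((2*K+1)/(2*K+2))" by simp
  finally show ?thesis .
qed

lemma frac_aux2: fixes K::real assumes "K \<ge> 0" shows "(2*K+1)/((2*K+2)^2) \<le> 1/(2*K+3)"
proof -
  have "(2*K+1)*(2*K+3) \<le> (2*K+2)^2" by (simp add: power2_eq_square algebra_simps)
  then show ?thesis using assms by (simp add: divide_simps)
qed

lemma central_step_real:
  fixes x y :: real and k :: nat
  assumes "y * (real k+1)^2 = (2*real k+1)*(2*real k+2) * x"
  shows "y / 4^(k+1) = x / 4^k * ((2*real k+1)/(2*real k+2))"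
proof -
  have "(y * (real k+1)) * (real k+1) = ((2*real k+1)*2*x) * (real k+1)"
    using assms by (simp add: algebra_simps power2_eq_square)
  then have "y * (real k+1) = (2*real k+1)*2*x"
    by (metis add_nonneg_pos mult_right_cancel of_nat_0_le_iff zero_less_one less_irrefl)
  then have y: "y = (2*real k+1) * 2 * x / (real k+1)"
    by (simp add: field_simps)
  have "y / 4^(k+1) = ((2*real k+1)*2*x/(real k+1))/(4*4^k)" unfolding y by simp
  also have "\<dots> = x / 4^k * ((2*real k+1)/(2*real k+2))" by (rule frac_aux1) auto
  finally show ?thesis .
qed

lemma central_sq_step_real:
  fixes a :: real and k :: nat
  assumes "a^2 \<le> 1 / (2*real k+1)"
  shows "(a * ((2*real k+1)/(2*real k+2)))^2 \<le> 1 / (2*real k+3)"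
proof -
  have "(a * ((2*real k+1)/(2*real k+2)))^2 = a^2 * ((2*real k+1)/(2*real k+2))^2"
    by (rule power_mult_distrib)
  also have "\<dots> \<le> (1 / (2*real k+1)) * ((2*real k+1)/(2*real k+2))^2"
    by (rule mult_right_mono) (use assms in auto)
  also have "(1 / (2*real k+1)) * ((2*real k+1)/(2*real k+2))^2 = (2*real k+1)/((2*real k+2)^2)"
    by (simp add: power2_eq_square)
  also have "\<dots> \<le> 1 / (2*real k+3)" by (rule frac_aux2) auto
  finally show ?thesis .
qed

lemma central_binom_sq: "(real (2*k choose k) / 4^k)^2 \<le> 1 / (2*real k+1)"
proof (induction k)
  case 0
  then show ?case by simp
next
  case (Suc k)
  have rec: "real (2*k+2 choose (k+1)) * (real k+1)^2 = (2*real k+1)*(2*real k+2) * real (2*k choose k)"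
    using arg_cong[OF central_binom_rec[of k], of real] by (simp add: algebra_simps power2_eq_square)
  have "real (2*k+2 choose (k+1)) / 4^(k+1) = real (2*k choose k) / 4^k * ((2*real k+1)/(2*real k+2))"
    by (rule central_step_real[OF rec])
  moreover have "(real (2*k choose k) / 4^k * ((2*real k+1)/(2*real k+2)))^2 \<le> 1 / (2*real k+3)"
    by (rule central_sq_step_real[OF Suc.IH])
  ultimately have "(real (2*k+2 choose (k+1)) / 4^(k+1))^2 \<le> 1 / (2*real k+3)" by simp
  moreover have "2 * Suc k = 2*k+2" "Suc k = k+1" "2 * real (Suc k) + 1 = 2*real k+3" by simp_all
  ultimately show ?case by metis
qed

lemma central_binom_le: "real (2*k choose k) / 4^k \<le> 1 / sqrt (2*real k+1)"
proof -
  have "real (2*k choose k) / 4^k = sqrt ((real (2*k choose k) / 4^k)^2)" by simp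
  also have "\<dots> \<le> sqrt (1 / (2*real k+1))" using central_binom_sq[of k] real_sqrt_le_mono by blast
  finally show ?thesis by (simp add: real_sqrt_divide)
qed

lemma binom_le_sqrt:
  assumes "m > 0"
  shows "real (m choose j) / 2^m \<le> 1 / sqrt m"
proof -
  have "real (m choose j) / 2^m \<le> real (m choose (m div 2)) / 2^m"
    by (intro divide_right_mono) (use binomial_maximum in auto)
  also have "\<dots> \<le> 1 / sqrt m"
  proof (cases "even m")
    case True
    then obtain k where k: "m = 2*k" by auto
    have "real (m choose (m div 2)) / 2^m = real (2*k choose k) / 4^k"
      by (simp add: k power_mult)
    also have "\<dots> \<le> 1 / sqrt (2*real k+1)" by (rule central_binom_le)
    also have "\<dots> \<le> 1 / sqrt m" using assms k
      by (intro divide_left_mono real_sqrt_le_mono) auto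
    finally show ?thesis .
  next
    case False
    then obtain k where k: "m = 2*k+1" using oddE by blast
    have b: "(k+1) * ((2*k+1) choose k) = (2*k+1) * (2*k choose k)"
      using binomial_absorb_comp[of "2*k+1" k] by (simp add: Suc_diff_le)
    have b': "real ((2*k+1) choose k) = (2*real k+1) * real (2*k choose k) / (real k+1)"
      using arg_cong[OF b, of real] by (simp add: field_simps)
    have "m div 2 = k" using k by simp
    then have "real (m choose (m div 2)) / 2^m = real ((2*k+1) choose k) / (2 * 4^k)"
      by (simp add: k power_mult)
    also have "\<dots> = (real (2*k choose k) / 4^k) * ((2*real k+1) / (2*real k+2))"
      unfolding b' by (simp add: field_simps)
    also have "\<dots> \<le> real (2*k choose k) / 4^k * 1"
      by (intro mult_left_mono) auto
    also have "\<dots> \<le> 1 / sqrt (2*real k+1)" using central_binom_le by simp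
    also have "\<dots> = 1 / sqrt m" by (simp add: k)
    finally show ?thesis .
  qed
  finally show ?thesis .
qed

section \<open>Rademacher sums\<close>

definition rad :: "int pmf" where "rad = pmf_of_set {-1, 1}"

lemma rad_bern: "rad = map_pmf (\<lambda>b. if b then 1 else -1) (bernoulli_pmf (1/2))"
proof -
  have "map_pmf (\<lambda>b. if b then 1 else -1::int) (pmf_of_set UNIV) =
        pmf_of_set ((\<lambda>b. if b then 1 else -1::int) ` UNIV)"
    by (rule map_pmf_of_set_inj) (auto simp: inj_on_def)
  also have "(\<lambda>b. if b then 1 else -1::int) ` UNIV = {-1, 1}"
    by (auto simp: UNIV_bool)
  finally show ?thesis unfolding rad_def bernoulli_pmf_half_conv_pmf_of_set by simp
qed

lemma sum_sign:
  "finite A \<Longrightarrow> (\<Sum>t\<in>A. (if v t then 1 else -1::int)) = 2 * int (card {t\<in>A. v t}) - int (card A)"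
proof (induction A rule: finite_induct)
  case empty
  then show ?case by simp
next
  case (insert x A)
  have c: "{t \<in> insert x A. v t} = (if v x then insert x {t\<in>A. v t} else {t\<in>A. v t})" by auto
  have "x \<notin> {t\<in>A. v t}" using insert by auto
  moreover have "finite {t\<in>A. v t}" using insert by auto
  ultimately show ?case using insert c by (auto simp: card_insert_if)
qed

lemma dep_sum_eq: "dep A (\<lambda>s. (\<Sum>t\<in>A. s t) = y)"
  by (rule depI) (metis (mono_tags, lifting) sum.cong)

lemma rad_bound:
  assumes "finite A" "card A > 0"
  shows "measure_pmf.prob (Pi_pmf A d (\<lambda>_. rad)) {s. (\<Sum>t\<in>A. s t) = y} \<le> 1 / sqrt (card A)"
proof -
  let ?m = "card A"
  let ?g = "\<lambda>b. if b then 1 else -1::int"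
  define K where "K = {k. 2 * int k - int ?m = y}"
  have "measure_pmf.prob (Pi_pmf A d (\<lambda>_. rad)) {s. (\<Sum>t\<in>A. s t) = y} =
        measure_pmf.prob (Pi_pmf A (-1) (\<lambda>_. rad)) {s. (\<Sum>t\<in>A. s t) = y}"
    by (rule prob_Pi_pmf_dflt[OF assms(1) dep_sum_eq])
  also have "Pi_pmf A (-1) (\<lambda>_. rad) = map_pmf (\<lambda>h. ?g \<circ> h) (Pi_pmf A False (\<lambda>_. bernoulli_pmf (1/2)))"
    unfolding rad_bern by (rule Pi_pmf_map) (auto simp: assms)
  also have "measure_pmf.prob (map_pmf (\<lambda>h. ?g \<circ> h) (Pi_pmf A False (\<lambda>_. bernoulli_pmf (1/2))))
        {s. (\<Sum>t\<in>A. s t) = y} =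
      measure_pmf.prob (Pi_pmf A False (\<lambda>_. bernoulli_pmf (1/2))) {v. (\<Sum>t\<in>A. ?g (v t)) = y}"
    by simp
  also have "{v. (\<Sum>t\<in>A. ?g (v t)) = y} = (\<lambda>v. card {t\<in>A. v t}) -` K"
    using sum_sign[OF assms(1)] by (auto simp: K_def)
  also have "measure_pmf.prob (Pi_pmf A False (\<lambda>_. bernoulli_pmf (1/2))) ((\<lambda>v. card {t\<in>A. v t}) -` K)
      = measure_pmf.prob (map_pmf (\<lambda>v. card {t\<in>A. v t}) (Pi_pmf A False (\<lambda>_. bernoulli_pmf (1/2)))) K"
    by simp
  also have "map_pmf (\<lambda>v. card {t\<in>A. v t}) (Pi_pmf A False (\<lambda>_. bernoulli_pmf (1/2))) = binomial_pmf ?m (1/2)"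
    by (rule binomial_pmf_altdef'[symmetric]) (auto simp: assms)
  also have "measure_pmf.prob (binomial_pmf ?m (1/2)) K \<le> 1 / sqrt ?m"
  proof (cases "K = {}")
    case True
    then show ?thesis by simp
  next
    case False
    then obtain k where k: "k \<in> K" by auto
    then have "K = {k}" by (auto simp: K_def)
    then have "measure_pmf.prob (binomial_pmf ?m (1/2)) K = pmf (binomial_pmf ?m (1/2)) k"
      by (simp add: measure_pmf_single)
    also have "\<dots> = real (?m choose k) * (1/2)^k * (1/2)^(?m - k)"
      using pmf_binomial[of "1/2" ?m k] by simp
    also have "\<dots> \<le> real (?m choose k) / 2^?m"
    proof (cases "k \<le> ?m")
      case True
      then have "(1/2::real)^k * (1/2)^(?m - k) = (1/2)^?m"
        by (metis power_add le_add_diff_inverse)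
      then show ?thesis by (simp add: power_one_over mult.assoc)
    next
      case False
      then have z: "real (?m choose k) = 0" by simp
      show ?thesis by (simp only: z)
    qed
    also have "\<dots> \<le> 1 / sqrt ?m" by (rule binom_le_sqrt) (use assms in auto)
    finally show ?thesis .
  qed
  finally show ?thesis .
qed

definition evec :: "'d \<Rightarrow> int \<Rightarrow> int^'d" where "evec k s = (\<chi> i. if i = k then s else 0)"

lemma evec_nth [simp]: "evec k s $ i = (if i = k then s else 0)"
  by (simp add: evec_def)

lemma unit_steps_eq: "(unit_steps :: (int^'d) set) = (\<lambda>(k,s). evec k s) ` (UNIV \<times> {-1,1})"
  unfolding unit_steps_def evec_def by auto

lemma inj_evec: "inj_on (\<lambda>(k,s). evec k s :: int^'d) (UNIV \<times> {-1,1})"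
proof (rule inj_onI, clarify)
  fix k k' :: 'd and s s' :: int
  assume s: "s \<in> {-1,1}" "s' \<in> {-1,1}" and e: "evec k s = evec k' s'"
  have "evec k s $ k = evec k' s' $ k" using e by simp
  then have 1: "s = (if k = k' then s' else 0)" by simp
  then have "k = k'" using s by (auto split: if_splits)
  then show "k = k' \<and> s = s'" using 1 by simp
qed

lemma finite_unit_steps [simp]: "finite (unit_steps :: (int^'d) set)"
  unfolding unit_steps_eq by simp

lemma card_unit_steps: "card (unit_steps :: (int^'d) set) = 2 * CARD('d)"
  unfolding unit_steps_eq by (subst card_image[OF inj_evec]) (simp add: card_cartesian_product)

lemma unit_steps_ne [simp]: "(unit_steps :: (int^'d) set) \<noteq> {}"
  unfolding unit_steps_eq by simp

lemma unit_steps_comp: "u \<in> unit_steps \<Longrightarrow> \<bar>u $ i\<bar> \<le> 1"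
  unfolding unit_steps_eq by auto

lemma pmf_of_set_times:
  assumes "finite A" "A \<noteq> {}" "finite B" "B \<noteq> {}"
  shows "pmf_of_set (A \<times> B) = pair_pmf (pmf_of_set A) (pmf_of_set B)"
proof (rule pmf_eqI)
  fix z :: "'a \<times> 'b"
  obtain a b where z: "z = (a, b)" by fastforce
  have "finite (A \<times> B)" "A \<times> B \<noteq> {}" using assms by auto
  then have "pmf (pmf_of_set (A \<times> B)) z = indicator (A \<times> B) z / real (card (A \<times> B))"
    by (subst pmf_of_set) auto
  also have "\<dots> = (indicator A a / real (card A)) * (indicator B b / real (card B))"
    by (simp add: z card_cartesian_product indicator_def)
  also have "\<dots> = pmf (pair_pmf (pmf_of_set A) (pmf_of_set B)) z"
    by (simp add: z pmf_pair assms)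
  finally show "pmf (pmf_of_set (A \<times> B)) z = pmf (pair_pmf (pmf_of_set A) (pmf_of_set B)) z" .
qed

lemma mu_decomp:
  "pmf_of_set (unit_steps :: (int^'d) set) = bind_pmf (pmf_of_set UNIV) (\<lambda>k. map_pmf (evec k) rad)"
proof -
  have "map_pmf (\<lambda>(k,s). evec k s :: int^'d) (pmf_of_set (UNIV \<times> {-1,1})) =
        pmf_of_set ((\<lambda>(k,s). evec k s) ` (UNIV \<times> {-1,1}))"
    by (rule map_pmf_of_set_inj[OF inj_evec]) auto
  then have "pmf_of_set (unit_steps :: (int^'d) set) =
       map_pmf (\<lambda>(k,s). evec k s) (pmf_of_set (UNIV \<times> {-1,1}))"
    unfolding unit_steps_eq by simp
  also have "pmf_of_set (UNIV \<times> {-1,1::int}) = pair_pmf (pmf_of_set (UNIV::'d set)) rad"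
    unfolding rad_def by (rule pmf_of_set_times) auto
  also have "map_pmf (\<lambda>(k,s). evec k s) (pair_pmf (pmf_of_set (UNIV::'d set)) rad) =
      bind_pmf (pmf_of_set UNIV) (\<lambda>k. map_pmf (evec k) rad)"
    by (simp add: pair_pmf_def map_bind_pmf map_pmf_def bind_return_pmf bind_assoc_pmf)
  finally show ?thesis .
qed

definition gq :: "nat \<Rightarrow> real" where "gq m = (if m = 0 then 1 else 1 / sqrt m)"

lemma gq_le1: "gq m \<le> 1"
  by (auto simp: gq_def)

lemma gq_nonneg: "gq m \<ge> 0"
  by (auto simp: gq_def)

lemma cond_bound:
  fixes J :: "'i set" and kk :: "'i \<Rightarrow> 'd::finite" and x :: "int^'d"
  assumes "finite J"
  shows "measure_pmf.prob (Pi_pmf J dflt (\<lambda>t. map_pmf (evec (kk t)) rad)) {f. (\<Sum>t\<in>J. f t) = x}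
         \<le> (\<Prod>i\<in>UNIV. gq (card {t\<in>J. kk t = i}))"
proof -
  let ?h = "\<lambda>ss t. if t \<in> J then evec (kk t) (ss t) else dflt"
  have e1: "Pi_pmf J dflt (\<lambda>t. map_pmf (evec (kk t)) rad) = map_pmf ?h (Pi_pmf J 0 (\<lambda>_. rad))"
  proof -
    have "Pi_pmf J dflt (\<lambda>t. map_pmf (evec (kk t)) rad) =
          Pi_pmf J dflt (\<lambda>t. bind_pmf rad (\<lambda>s. return_pmf (evec (kk t) s)))"
      by (simp add: map_pmf_def)
    also have "\<dots> = bind_pmf (Pi_pmf J 0 (\<lambda>_. rad)) (\<lambda>ss. Pi_pmf J dflt (\<lambda>t. return_pmf (evec (kk t) (ss t))))"
      by (rule Pi_pmf_bind[OF assms])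
    also have "\<dots> = bind_pmf (Pi_pmf J 0 (\<lambda>_. rad)) (\<lambda>ss. return_pmf (?h ss))"
      using assms by simp
    also have "\<dots> = map_pmf ?h (Pi_pmf J 0 (\<lambda>_. rad))"
      by (simp add: map_pmf_def)
    finally show ?thesis .
  qed
  define A where "A = (\<lambda>i. {t\<in>J. kk t = i})"
  have finA: "finite (A i)" for i using assms by (auto simp: A_def)
  have JA: "J = (\<Union>i\<in>UNIV. A i)" by (auto simp: A_def)
  have set_eq: "?h -` {f. (\<Sum>t\<in>J. f t) = x} = {ss. \<forall>i\<in>UNIV. (\<Sum>t\<in>A i. ss t) = x $ i}"
  proof -
    have "(\<Sum>t\<in>J. ?h ss t) $ i = (\<Sum>t\<in>A i. ss t)" for ss i
    proof -
      have "(\<Sum>t\<in>J. ?h ss t) $ i = (\<Sum>t\<in>J. (if kk t = i then ss t else 0))"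
        by (simp add: sum_component) (rule sum.cong, auto)
      also have "\<dots> = (\<Sum>t\<in>A i. ss t)"
        unfolding A_def by (rule sum.inter_filter[symmetric, OF assms])
      finally show ?thesis .
    qed
    then show ?thesis by (auto simp: vec_eq_iff)
  qed
  have "measure_pmf.prob (Pi_pmf J dflt (\<lambda>t. map_pmf (evec (kk t)) rad)) {f. (\<Sum>t\<in>J. f t) = x}
      = measure_pmf.prob (Pi_pmf J 0 (\<lambda>_. rad)) {ss. \<forall>i\<in>UNIV. (\<Sum>t\<in>A i. ss t) = x $ i}"
    by (simp only: e1 measure_map_pmf set_eq)
  also have "\<dots> = measure_pmf.prob (Pi_pmf (\<Union>i\<in>UNIV. A i) 0 (\<lambda>_. rad)) {ss. \<forall>i\<in>UNIV. (\<Sum>t\<in>A i. ss t) = x $ i}"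
    using JA by simp
  also have "\<dots> = (\<Prod>i\<in>UNIV. measure_pmf.prob (Pi_pmf (A i) 0 (\<lambda>_. rad)) {ss. (\<Sum>t\<in>A i. ss t) = x $ i})"
    by (rule prob_Pi_pmf_indep_family) (auto simp: finA disjoint_family_on_def intro: dep_sum_eq, auto simp: A_def)
  also have "\<dots> \<le> (\<Prod>i\<in>UNIV. gq (card (A i)))"
  proof (rule prod_mono, rule conjI)
    fix i :: 'd
    show "0 \<le> measure_pmf.prob (Pi_pmf (A i) 0 (\<lambda>_. rad)) {ss. (\<Sum>t\<in>A i. ss t) = x $ i}" by simp
    show "measure_pmf.prob (Pi_pmf (A i) 0 (\<lambda>_. rad)) {ss. (\<Sum>t\<in>A i. ss t) = x $ i} \<le> gq (card (A i))"
    proof (cases "card (A i) = 0")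
      case True
      then show ?thesis by (simp add: gq_def)
    next
      case False
      then show ?thesis unfolding gq_def using rad_bound[OF finA, of i 0 "x $ i"] by simp
    qed
  qed
  finally show ?thesis by (simp add: A_def)
qed

lemma bern_map:
  "map_pmf (\<lambda>k. k = i) (pmf_of_set (UNIV::'d::finite set)) = bernoulli_pmf (1 / real CARD('d))"
proof (rule pmf_eqI)
  fix b :: bool
  have d0: "real CARD('d) > 0" by simp
  have "pmf (map_pmf (\<lambda>k. k = i) (pmf_of_set (UNIV::'d set))) b =
        measure_pmf.prob (pmf_of_set (UNIV::'d set)) ((\<lambda>k. k = i) -` {b})"
    by (simp add: pmf_map)
  also have "\<dots> = real (card ((\<lambda>k. k = i) -` {b})) / real CARD('d)"
    by (subst measure_pmf_of_set) auto
  also have "\<dots> = pmf (bernoulli_pmf (1 / real CARD('d))) b"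
  proof (cases b)
    case True
    then have "(\<lambda>k. k = i) -` {b} = {i}" by auto
    then show ?thesis using True d0 by (simp add: pmf_bernoulli_True)
  next
    case False
    then have "(\<lambda>k. k = i) -` {b} = UNIV - {i}" by auto
    then have "real (card ((\<lambda>k. k = i) -` {b})) = real CARD('d) - 1"
      by (simp add: card_Diff_singleton of_nat_diff)
    then show ?thesis using False d0 by (simp add: pmf_bernoulli_False field_simps)
  qed
  finally show "pmf (map_pmf (\<lambda>k. k = i) (pmf_of_set UNIV)) b = pmf (bernoulli_pmf (1 / real CARD('d))) b" .
qed

lemma count_tail:
  fixes J :: "'i set" and i :: "'d::finite"
  assumes "finite J" "card J > 0"
  shows "measure_pmf.prob (Pi_pmf J k0 (\<lambda>_. pmf_of_set (UNIV::'d set)))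
           {kk. real (card {t\<in>J. kk t = i}) < real (card J) / (2 * real CARD('d))}
         \<le> exp (- (real (card J) / (2 * real CARD('d)^2)))"
proof -
  let ?n = "card J" and ?d = "real CARD('d)"
  let ?f = "\<lambda>k::'d. k = i"
  let ?P = "\<lambda>c::nat. real c < real ?n / (2 * ?d)"
  have d0: "?d > 0" by simp
  have "Pi_pmf J (?f k0) (\<lambda>_. map_pmf ?f (pmf_of_set UNIV)) = map_pmf (\<lambda>h. ?f \<circ> h) (Pi_pmf J k0 (\<lambda>_. pmf_of_set UNIV))"
    by (rule Pi_pmf_map[OF assms(1)]) simp
  then have "measure_pmf.prob (Pi_pmf J k0 (\<lambda>_. pmf_of_set (UNIV::'d set))) {kk. ?P (card {t\<in>J. kk t = i})}
      = measure_pmf.prob (Pi_pmf J (?f k0) (\<lambda>_. bernoulli_pmf (1/?d))) {v. ?P (card {t\<in>J. v t})}"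
    by (simp add: bern_map)
  also have "\<dots> = measure_pmf.prob (map_pmf (\<lambda>v. card {t\<in>J. v t}) (Pi_pmf J (?f k0) (\<lambda>_. bernoulli_pmf (1/?d)))) {c. ?P c}"
    by simp
  also have "map_pmf (\<lambda>v. card {t\<in>J. v t}) (Pi_pmf J (?f k0) (\<lambda>_. bernoulli_pmf (1/?d))) = binomial_pmf ?n (1/?d)"
    by (rule binomial_pmf_altdef'[symmetric]) (use assms d0 in auto)
  also have "measure_pmf.prob (binomial_pmf ?n (1/?d)) {c. ?P c} \<le>
      measure_pmf.prob (binomial_pmf ?n (1/?d)) {c. real c \<le> real ?n * (1/?d) - real ?n / (2 * ?d)}"
  proof (rule measure_pmf.finite_measure_mono)
    have "real ?n * (1/?d) - real ?n / (2 * ?d) = real ?n / (2 * ?d)" by (simp add: field_simps)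
    then show "{c. ?P c} \<subseteq> {c. real c \<le> real ?n * (1/?d) - real ?n / (2 * ?d)}" by auto
  qed simp
  also have "\<dots> \<le> exp (- 2 * (real ?n / (2 * ?d))^2 / real ?n)"
  proof (rule binomial_distribution.prob_le)
    show "binomial_distribution (1/?d)" by unfold_locales (use d0 in auto)
  qed (use assms d0 in auto)
  also have "- 2 * (real ?n / (2 * ?d))^2 / real ?n = - (real ?n / (2 * ?d^2))"
    using assms d0 by (simp add: field_simps power2_eq_square)
  finally show ?thesis .
qed

lemma prod_gq_bound:
  fixes J :: "'i set" and kk :: "'i \<Rightarrow> 'd::finite" and \<tau> :: real
  assumes "\<tau> > 0"
  shows "(\<Prod>i\<in>UNIV. gq (card {t\<in>J. kk t = i})) \<le>
         indicator {kk. \<exists>i. real (card {t\<in>J. kk t = i}) < \<tau>} kk + \<tau> powr (- (real CARD('d) / 2))"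
proof (cases "\<exists>i. real (card {t\<in>J. kk t = i}) < \<tau>")
  case True
  have "(\<Prod>i\<in>UNIV. gq (card {t\<in>J. kk t = i})) \<le> (\<Prod>i\<in>(UNIV::'d set). 1)"
    by (rule prod_mono) (auto simp: gq_le1 gq_nonneg)
  also have "\<dots> \<le> 1 + \<tau> powr (- (real CARD('d) / 2))" by simp
  finally show ?thesis using True by simp
next
  case False
  have "(\<Prod>i\<in>UNIV. gq (card {t\<in>J. kk t = i})) \<le> (\<Prod>i\<in>(UNIV::'d set). 1 / sqrt \<tau>)"
  proof (rule prod_mono, rule conjI)
    fix i
    show "0 \<le> gq (card {t\<in>J. kk t = i})" by (rule gq_nonneg)
    have c: "real (card {t\<in>J. kk t = i}) \<ge> \<tau>" using False by (auto simp: not_less)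
    then have "card {t\<in>J. kk t = i} \<noteq> 0" using assms by auto
    then show "gq (card {t\<in>J. kk t = i}) \<le> 1 / sqrt \<tau>"
      unfolding gq_def using c assms by (auto intro!: divide_left_mono real_sqrt_le_mono)
  qed
  also have "\<dots> = (1 / sqrt \<tau>) ^ CARD('d)" by simp
  also have "\<dots> = \<tau> powr (- (real CARD('d) / 2))"
  proof -
    have "(1 / sqrt \<tau>) ^ CARD('d) = 1 / (\<tau> powr (1/2)) ^ CARD('d)"
      using assms by (simp add: powr_half_sqrt power_one_over)
    also have "(\<tau> powr (1/2)) ^ CARD('d) = \<tau> powr (real CARD('d) / 2)"
      using assms by (simp add: powr_realpow[symmetric] powr_powr)
    finally show ?thesis using assms by (simp add: powr_minus_divide)
  qed
  finally show ?thesis using False by simp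
qed

lemma HK_bound_raw:
  fixes J :: "'i set" and x :: "int^'d"
  assumes "finite J" "card J > 0"
  shows "measure_pmf.prob (Pi_pmf J dflt (\<lambda>_. pmf_of_set (unit_steps::(int^'d) set))) {f. (\<Sum>t\<in>J. f t) = x}
     \<le> real CARD('d) * exp (- (real (card J) / (2 * real CARD('d)^2)))
        + (real (card J) / (2 * real CARD('d))) powr (- (real CARD('d) / 2))"
proof -
  let ?n = "card J" and ?d = "real CARD('d)"
  define \<tau> where "\<tau> = real ?n / (2 * ?d)"
  have tau: "\<tau> > 0" using assms by (simp add: \<tau>_def)
  let ?E = "{f. (\<Sum>t\<in>J. f t) = x}"
  let ?K = "Pi_pmf J undefined (\<lambda>_. pmf_of_set (UNIV::'d set))"
  let ?Q = "\<lambda>kk. Pi_pmf J dflt (\<lambda>t. map_pmf (evec (kk t)) rad)"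
  let ?B = "{kk. \<exists>i. real (card {t\<in>J. kk t = i}) < \<tau>}"
  let ?c = "\<tau> powr (- (?d / 2))"
  have "Pi_pmf J dflt (\<lambda>_. pmf_of_set (unit_steps::(int^'d) set)) = bind_pmf ?K ?Q"
    unfolding mu_decomp by (rule Pi_pmf_bind[OF assms(1)])
  then have "measure_pmf.prob (Pi_pmf J dflt (\<lambda>_. pmf_of_set (unit_steps::(int^'d) set))) ?E
      = measure (measure_pmf ?K \<bind> (\<lambda>kk. measure_pmf (?Q kk))) ?E"
    by (simp add: measure_pmf_bind)
  also have "\<dots> = measure_pmf.expectation ?K (\<lambda>kk. measure_pmf.prob (?Q kk) ?E)"
    by (rule measure_pmf.measure_bind[where N = "count_space UNIV"])
       (auto simp: measurable_pmf_measure1 space_subprob_algebra intro: prob_space_imp_subprob_space measure_pmf.prob_space_axioms)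
  also have "\<dots> \<le> measure_pmf.expectation ?K (\<lambda>kk. indicator ?B kk + ?c)"
  proof (rule integral_mono)
    show "integrable (measure_pmf ?K) (\<lambda>kk. measure_pmf.prob (?Q kk) ?E)"
      by (rule measure_pmf.integrable_const_bound[where B = 1]) (auto simp: measurable_pmf_measure1)
    show "integrable (measure_pmf ?K) (\<lambda>kk. indicator ?B kk + ?c)"
      by (rule measure_pmf.integrable_const_bound[where B = "1 + ?c"])
         (auto simp: measurable_pmf_measure1 indicator_def)
    fix kk :: "'i \<Rightarrow> 'd"
    have "measure_pmf.prob (?Q kk) ?E \<le> (\<Prod>i\<in>UNIV. gq (card {t\<in>J. kk t = i}))"
      by (rule cond_bound[OF assms(1)])
    also have "\<dots> \<le> indicator ?B kk + ?c" by (rule prod_gq_bound[OF tau])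
    finally show "measure_pmf.prob (?Q kk) ?E \<le> indicator ?B kk + ?c" .
  qed
  also have "\<dots> = measure_pmf.prob ?K ?B + ?c"
    by (subst Bochner_Integration.integral_add) (auto simp: measurable_pmf_measure1 intro!: measure_pmf.integrable_const_bound[where B = 1])
  also have "measure_pmf.prob ?K ?B \<le> ?d * exp (- (real ?n / (2 * ?d^2)))"
  proof -
    have eq: "?B = (\<Union>i\<in>UNIV. {kk. real (card {t\<in>J. kk t = i}) < \<tau>})" by auto
    have "measure_pmf.prob ?K ?B \<le> (\<Sum>i\<in>UNIV. measure_pmf.prob ?K {kk. real (card {t\<in>J. kk t = i}) < \<tau>})"
      unfolding eq by (rule measure_pmf.finite_measure_subadditive_finite) auto
    also have "\<dots> \<le> (\<Sum>i\<in>(UNIV::'d set). exp (- (real ?n / (2 * ?d^2))))"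
      by (rule sum_mono) (unfold \<tau>_def, rule count_tail[OF assms])
    also have "\<dots> = ?d * exp (- (real ?n / (2 * ?d^2)))" by simp
    finally show ?thesis .
  qed
  finally show ?thesis by (simp add: \<tau>_def)
qed

definition Chk :: "nat \<Rightarrow> real" where
  "Chk d = real d * (2 * real d ^ 3) ^ d + (2 * real d) powr (real d / 2)"

lemma exp_neg_le_pow:
  fixes n d :: nat
  assumes "n > 0" "d > 0"
  shows "exp (- (real n / (2 * real d^2))) \<le> (2 * real d ^ 3) ^ d * real n powr (- (real d / 2))"
proof -
  let ?x = "real n / (2 * real d^2)"
  have x0: "?x \<ge> 0" by simp
  have "(1 + ?x / real d) ^ d \<le> exp ?x"
  proof (rule exp_ge_one_plus_x_over_n_power_n)
    show "- real d \<le> ?x" using x0 by linarith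
    show "0 < d" using assms by simp
  qed
  moreover have "(?x / real d) ^ d \<le> (1 + ?x / real d) ^ d"
    by (rule power_mono) (use x0 assms in auto)
  ultimately have ex: "(?x / real d) ^ d \<le> exp ?x" by linarith
  have xd: "?x / real d = real n / (2 * real d ^ 3)"
    using assms by (simp add: field_simps power2_eq_square power3_eq_cube)
  have pos: "(real n / (2 * real d ^ 3)) ^ d > 0" using assms by simp
  have "exp (- ?x) = 1 / exp ?x" by (simp add: exp_minus field_simps)
  also have "\<dots> \<le> 1 / (real n / (2 * real d ^ 3)) ^ d"
    using ex[unfolded xd] pos by (intro divide_left_mono) auto
  also have "\<dots> = (2 * real d ^ 3) ^ d * (1 / real n ^ d)"
    by (simp add: power_divide field_simps)
  also have "1 / real n ^ d \<le> real n powr (- (real d / 2))"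
  proof -
    have "real n powr (real d / 2) \<le> real n powr real d"
      using assms by (intro powr_mono) auto
    also have "\<dots> = real n ^ d" using assms by (simp add: powr_realpow)
    finally have "real n powr (real d / 2) \<le> real n ^ d" .
    then have "1 / real n ^ d \<le> 1 / real n powr (real d / 2)"
      using assms by (intro divide_left_mono) auto
    then show ?thesis using assms by (simp add: powr_minus_divide)
  qed
  then have "(2 * real d ^ 3) ^ d * (1 / real n ^ d) \<le> (2 * real d ^ 3) ^ d * real n powr (- (real d / 2))"
    by (intro mult_left_mono) auto
  finally show ?thesis .
qed

lemma HK_bound:
  fixes J :: "'i set" and x :: "int^'d"
  assumes "finite J" "card J > 0"
  shows "measure_pmf.prob (Pi_pmf J dflt (\<lambda>_. pmf_of_set (unit_steps::(int^'d) set))) {f. (\<Sum>t\<in>J. f t) = x}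
     \<le> Chk CARD('d) * real (card J) powr (- (real CARD('d) / 2))"
proof -
  let ?n = "card J" and ?d = "CARD('d)"
  have d0: "?d > 0" by simp
  have a: "real ?d * exp (- (real ?n / (2 * real ?d^2))) \<le> real ?d * ((2 * real ?d ^ 3) ^ ?d * real ?n powr (- (real ?d / 2)))"
    by (intro mult_left_mono exp_neg_le_pow) (use assms d0 in auto)
  have b: "(real ?n / (2 * real ?d)) powr (- (real ?d / 2)) = (2 * real ?d) powr (real ?d / 2) * real ?n powr (- (real ?d / 2))"
    using assms by (simp add: powr_divide powr_minus field_simps)
  have "measure_pmf.prob (Pi_pmf J dflt (\<lambda>_. pmf_of_set (unit_steps::(int^'d) set))) {f. (\<Sum>t\<in>J. f t) = x}
     \<le> real ?d * exp (- (real ?n / (2 * real ?d^2))) + (real ?n / (2 * real ?d)) powr (- (real ?d / 2))"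
    by (rule HK_bound_raw[OF assms])
  also have "\<dots> \<le> Chk ?d * real ?n powr (- (real ?d / 2))"
    using a b by (simp add: Chk_def algebra_simps)
  finally show ?thesis .
qed

lemma Chk_pos: "d > 0 \<Longrightarrow> Chk d > 0"
  by (auto simp: Chk_def intro!: add_pos_pos)

lemma set_Pi_pmf_unit:
  assumes "finite J" "f \<in> set_pmf (Pi_pmf J d (\<lambda>_. pmf_of_set (unit_steps::(int^'d) set)))" "t \<in> J"
  shows "f t \<in> unit_steps"
  using assms by (auto simp: set_Pi_pmf PiE_dflt_def)

lemma sum_far_zero:
  fixes J :: "'i set" and y :: "int^'d"
  assumes "finite J" "int (card J) < \<bar>y $ k\<bar>"
  shows "measure_pmf.prob (Pi_pmf J d (\<lambda>_. pmf_of_set (unit_steps::(int^'d) set))) {f. (\<Sum>t\<in>J. f t) = y} = 0"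
proof -
  have "f \<notin> {f. (\<Sum>t\<in>J. f t) = y}" if f: "f \<in> set_pmf (Pi_pmf J d (\<lambda>_. pmf_of_set (unit_steps::(int^'d) set)))" for f
  proof
    assume "f \<in> {f. (\<Sum>t\<in>J. f t) = y}"
    then have "y $ k = (\<Sum>t\<in>J. f t $ k)" by (auto simp: sum_component)
    then have "\<bar>y $ k\<bar> \<le> (\<Sum>t\<in>J. \<bar>f t $ k\<bar>)" by (simp add: sum_abs)
    also have "\<dots> \<le> (\<Sum>t\<in>J. 1)"
      by (rule sum_mono) (use unit_steps_comp set_Pi_pmf_unit[OF assms(1) f] in blast)
    finally show False using assms by simp
  qed
  then show ?thesis by (subst measure_pmf_zero_iff) blast
qed

lemma prob_const_segment:
  fixes S :: "'i set" and u :: "int^'d"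
  assumes "finite S" "u \<in> unit_steps"
  shows "measure_pmf.prob (Pi_pmf S d (\<lambda>_. pmf_of_set (unit_steps::(int^'d) set))) {f. \<forall>t\<in>S. f t = u}
       = (1 / (2 * real CARD('d))) ^ card S"
proof -
  have "{f. \<forall>t\<in>S. f t = u} = Pi S (\<lambda>_. {u})" by (auto simp: Pi_def)
  then have "measure_pmf.prob (Pi_pmf S d (\<lambda>_. pmf_of_set (unit_steps::(int^'d) set))) {f. \<forall>t\<in>S. f t = u}
      = (\<Prod>t\<in>S. measure_pmf.prob (pmf_of_set (unit_steps::(int^'d) set)) {u})"
    using measure_Pi_pmf_Pi[OF assms(1), of d "\<lambda>_. pmf_of_set (unit_steps::(int^'d) set)" "\<lambda>_. {u}"] by simp
  also have "\<dots> = (\<Prod>t\<in>S. 1 / (2 * real CARD('d)))"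
    using assms by (simp add: measure_pmf_of_set card_unit_steps)
  finally show ?thesis by simp
qed

section \<open>The two-walk probability space\<close>

definition Dstep :: "(nat \<Rightarrow> int^'d) \<times> (nat \<Rightarrow> int^'d) \<Rightarrow> int \<Rightarrow> int^'d" where
  "Dstep \<omega> t = (if t \<ge> 1 then fst \<omega> (nat (t - 1)) else - snd \<omega> (nat (- t)))"

lemma space_srw [simp]: "space (srw_step :: (int^'d) measure) = UNIV"
  by (simp add: srw_step_def)

lemma sets_srw [simp]: "sets (srw_step :: (int^'d) measure) = UNIV"
  by (simp add: srw_step_def)

lemma prob_space_srw: "prob_space (srw_step :: (int^'d) measure)"
  by (simp add: srw_step_def measure_pmf.prob_space_axioms)

lemma prob_space_step: "prob_space (step_space :: (nat \<Rightarrow> int^'d) measure)"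
  unfolding step_space_def by (rule prob_space_PiM) (rule prob_space_srw)

lemma space_step [simp]: "space (step_space :: (nat \<Rightarrow> int^'d) measure) = UNIV"
  by (simp add: step_space_def space_PiM PiE_UNIV_domain)

lemma prob_space_two: "prob_space (two_walk_space :: ((nat \<Rightarrow> int^'d) \<times> (nat \<Rightarrow> int^'d)) measure)"
  unfolding two_walk_space_def by (rule prob_space_pair[OF prob_space_step prob_space_step])

lemma space_two [simp]: "space (two_walk_space :: ((nat \<Rightarrow> int^'d) \<times> (nat \<Rightarrow> int^'d)) measure) = UNIV"
  by (simp add: two_walk_space_def space_pair_measure)

lemma meas_comp_step: "(\<lambda>\<omega>. \<omega> i) \<in> (step_space :: (nat \<Rightarrow> int^'d) measure) \<rightarrow>\<^sub>M count_space UNIV"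
proof -
  have "(\<lambda>\<omega>. \<omega> i) \<in> (step_space :: (nat \<Rightarrow> int^'d) measure) \<rightarrow>\<^sub>M srw_step"
    unfolding step_space_def by (rule measurable_component_singleton) simp
  moreover have "(step_space :: (nat \<Rightarrow> int^'d) measure) \<rightarrow>\<^sub>M (srw_step :: (int^'d) measure) =
      step_space \<rightarrow>\<^sub>M count_space UNIV"
    by (rule measurable_cong_sets) auto
  ultimately show ?thesis by simp
qed

lemma meas_D: "(\<lambda>\<omega>. Dstep \<omega> t) \<in> (two_walk_space :: ((nat \<Rightarrow> int^'d) \<times> (nat \<Rightarrow> int^'d)) measure) \<rightarrow>\<^sub>M count_space UNIV"
proof (cases "t \<ge> 1")
  case True
  then have eq: "(\<lambda>\<omega>. Dstep \<omega> t) = (\<lambda>\<omega>1. \<omega>1 (nat (t - 1))) \<circ> fst"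
    by (auto simp: Dstep_def fun_eq_iff)
  show ?thesis unfolding eq two_walk_space_def
    by (rule measurable_comp[OF measurable_fst meas_comp_step])
next
  case False
  then have eq: "(\<lambda>\<omega>. Dstep \<omega> t) = uminus \<circ> ((\<lambda>\<omega>1. \<omega>1 (nat (- t))) \<circ> snd)"
    by (auto simp: Dstep_def fun_eq_iff)
  show ?thesis unfolding eq two_walk_space_def
    by (rule measurable_comp[OF measurable_comp[OF measurable_snd meas_comp_step]])
       (simp add: measurable_count_space_eq1)
qed

lemma sets_D_eq:
  "{\<omega> \<in> space two_walk_space. Dstep \<omega> t = v} \<in> sets (two_walk_space :: ((nat \<Rightarrow> int^'d) \<times> (nat \<Rightarrow> int^'d)) measure)"
proof -
  have "{\<omega> \<in> space two_walk_space. Dstep \<omega> t = v} = (\<lambda>\<omega>. Dstep \<omega> t) -` {v} \<inter> space (two_walk_space :: ((nat \<Rightarrow> int^'d) \<times> (nat \<Rightarrow> int^'d)) measure)"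
    by auto
  also have "\<dots> \<in> sets two_walk_space" by (rule measurable_sets[OF meas_D]) simp
  finally show ?thesis .
qed

lemma sets_cyl:
  assumes "finite J"
  shows "{\<omega> \<in> space two_walk_space. \<forall>t\<in>J. Dstep \<omega> t = a t} \<in> sets (two_walk_space :: ((nat \<Rightarrow> int^'d) \<times> (nat \<Rightarrow> int^'d)) measure)"
  by (rule sets.sets_Collect_finite_All[OF sets_D_eq assms])

lemma emeasure_step_cyl:
  fixes I :: "nat set" and b :: "nat \<Rightarrow> int^'d"
  assumes "finite I" "\<forall>i\<in>I. b i \<in> unit_steps"
  shows "emeasure (step_space :: (nat \<Rightarrow> int^'d) measure) {\<omega>. \<forall>i\<in>I. \<omega> i = b i}
       = ennreal ((1 / (2 * real CARD('d))) ^ card I)"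
proof -
  have "{\<omega>. \<forall>i\<in>I. \<omega> i = b i} = prod_emb UNIV (\<lambda>_. srw_step :: (int^'d) measure) I (Pi\<^sub>E I (\<lambda>i. {b i}))"
    by (auto simp: prod_emb_def PiE_def extensional_def Pi_iff)
  then have "emeasure (step_space :: (nat \<Rightarrow> int^'d) measure) {\<omega>. \<forall>i\<in>I. \<omega> i = b i}
      = (\<Prod>i\<in>I. emeasure (srw_step :: (int^'d) measure) {b i})"
    unfolding step_space_def by (simp add: emeasure_PiM_emb prob_space_srw assms)
  also have "\<dots> = (\<Prod>i\<in>I. ennreal (1 / (2 * real CARD('d))))"
  proof (rule prod.cong)
    fix i assume "i \<in> I"
    then have "b i \<in> unit_steps" using assms by auto
    then show "emeasure (srw_step :: (int^'d) measure) {b i} = ennreal (1 / (2 * real CARD('d)))"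
      unfolding srw_step_def by (subst emeasure_pmf_of_set) (auto simp: card_unit_steps)
  qed simp
  also have "\<dots> = ennreal ((1 / (2 * real CARD('d))) ^ card I)"
    by (simp add: prod_ennreal ennreal_power)
  finally show ?thesis .
qed

lemma emeasure_cyl:
  fixes J :: "int set" and a :: "int \<Rightarrow> int^'d"
  assumes J: "finite J" and a: "\<forall>t\<in>J. a t \<in> unit_steps"
  shows "emeasure (two_walk_space :: ((nat \<Rightarrow> int^'d) \<times> (nat \<Rightarrow> int^'d)) measure)
           {\<omega>. \<forall>t\<in>J. Dstep \<omega> t = a t} = ennreal ((1 / (2 * real CARD('d))) ^ card J)"
proof -
  let ?c = "1 / (2 * real CARD('d))"
  define I1 where "I1 = (\<lambda>i::nat. int i + 1) -` J"
  define I2 where "I2 = (\<lambda>i::nat. - int i) -` J"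
  have fin1: "finite I1" unfolding I1_def by (rule finite_vimageI[OF J]) (auto simp: inj_def)
  have fin2: "finite I2" unfolding I2_def by (rule finite_vimageI[OF J]) (auto simp: inj_def)
  define C1 where "C1 = {\<omega>1::nat \<Rightarrow> int^'d. \<forall>i\<in>I1. \<omega>1 i = a (int i + 1)}"
  define C2 where "C2 = {\<omega>2::nat \<Rightarrow> int^'d. \<forall>i\<in>I2. \<omega>2 i = - a (- int i)}"
  have seteq: "{\<omega>. \<forall>t\<in>J. Dstep \<omega> t = a t} = C1 \<times> C2"
  proof (intro set_eqI iffI)
    fix \<omega> :: "(nat \<Rightarrow> int^'d) \<times> (nat \<Rightarrow> int^'d)"
    assume h: "\<omega> \<in> {\<omega>. \<forall>t\<in>J. Dstep \<omega> t = a t}"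
    have "fst \<omega> \<in> C1"
    proof -
      have "fst \<omega> i = a (int i + 1)" if "i \<in> I1" for i
        using h that by (auto simp: I1_def Dstep_def)
      then show ?thesis by (auto simp: C1_def)
    qed
    moreover have "snd \<omega> \<in> C2"
    proof -
      have "snd \<omega> i = - a (- int i)" if "i \<in> I2" for i
      proof -
        have "Dstep \<omega> (- int i) = a (- int i)" using h that by (auto simp: I2_def)
        moreover have "Dstep \<omega> (- int i) = - snd \<omega> i" by (simp add: Dstep_def)
        ultimately show ?thesis by (metis minus_minus)
      qed
      then show ?thesis by (auto simp: C2_def)
    qed
    ultimately show "\<omega> \<in> C1 \<times> C2" by (cases \<omega>) auto
  next
    fix \<omega> :: "(nat \<Rightarrow> int^'d) \<times> (nat \<Rightarrow> int^'d)"
    assume h: "\<omega> \<in> C1 \<times> C2"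
    have "Dstep \<omega> t = a t" if t: "t \<in> J" for t
    proof (cases "t \<ge> 1")
      case True
      then have "nat (t - 1) \<in> I1" "int (nat (t - 1)) + 1 = t" using t by (auto simp: I1_def)
      then show ?thesis using h True by (auto simp: C1_def Dstep_def)
    next
      case False
      then have "nat (- t) \<in> I2" "- int (nat (- t)) = t" using t by (auto simp: I2_def)
      then show ?thesis using h False by (auto simp: C2_def Dstep_def)
    qed
    then show "\<omega> \<in> {\<omega>. \<forall>t\<in>J. Dstep \<omega> t = a t}" by auto
  qed
  have sC1: "C1 \<in> sets (step_space :: (nat \<Rightarrow> int^'d) measure)"
  proof -
    have "C1 = {\<omega>\<in>space (step_space :: (nat \<Rightarrow> int^'d) measure). \<forall>i\<in>I1. \<omega> i = a (int i + 1)}"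
      by (simp add: C1_def)
    also have "\<dots> \<in> sets step_space"
    proof (rule sets.sets_Collect_finite_All[OF _ fin1])
      fix i
      have "{\<omega> \<in> space step_space. \<omega> i = a (int i + 1)} = (\<lambda>\<omega>. \<omega> i) -` {a (int i + 1)} \<inter> space (step_space :: (nat \<Rightarrow> int^'d) measure)"
        by auto
      also have "\<dots> \<in> sets step_space" by (rule measurable_sets[OF meas_comp_step]) simp
      finally show "{\<omega> \<in> space (step_space :: (nat \<Rightarrow> int^'d) measure). \<omega> i = a (int i + 1)} \<in> sets step_space" .
    qed
    finally show ?thesis .
  qed
  have sC2: "C2 \<in> sets (step_space :: (nat \<Rightarrow> int^'d) measure)"
  proof -
    have "C2 = {\<omega>\<in>space (step_space :: (nat \<Rightarrow> int^'d) measure). \<forall>i\<in>I2. \<omega> i = - a (- int i)}"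
      by (simp add: C2_def)
    also have "\<dots> \<in> sets step_space"
    proof (rule sets.sets_Collect_finite_All[OF _ fin2])
      fix i
      have "{\<omega> \<in> space step_space. \<omega> i = - a (- int i)} = (\<lambda>\<omega>. \<omega> i) -` {- a (- int i)} \<inter> space (step_space :: (nat \<Rightarrow> int^'d) measure)"
        by auto
      also have "\<dots> \<in> sets step_space" by (rule measurable_sets[OF meas_comp_step]) simp
      finally show "{\<omega> \<in> space (step_space :: (nat \<Rightarrow> int^'d) measure). \<omega> i = - a (- int i)} \<in> sets step_space" .
    qed
    finally show ?thesis .
  qed
  have sf: "sigma_finite_measure (step_space :: (nat \<Rightarrow> int^'d) measure)"
    using prob_space_step by (rule prob_space_imp_sigma_finite)
  have e1: "emeasure (step_space :: (nat \<Rightarrow> int^'d) measure) C1 = ennreal (?c ^ card I1)"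
    unfolding C1_def by (rule emeasure_step_cyl[OF fin1]) (use a in \<open>auto simp: I1_def\<close>)
  have negU: "- u \<in> unit_steps" if "u \<in> unit_steps" for u :: "int^'d"
    using that unfolding unit_steps_def by (auto simp: vec_eq_iff)
  have e2: "emeasure (step_space :: (nat \<Rightarrow> int^'d) measure) C2 = ennreal (?c ^ card I2)"
    unfolding C2_def by (rule emeasure_step_cyl[OF fin2]) (use a negU in \<open>auto simp: I2_def\<close>)
  have cardJ: "card J = card I1 + card I2"
  proof -
    have "J = (\<lambda>i::nat. int i + 1) ` I1 \<union> (\<lambda>i::nat. - int i) ` I2"
    proof (intro set_eqI iffI)
      fix t assume t: "t \<in> J"
      show "t \<in> (\<lambda>i::nat. int i + 1) ` I1 \<union> (\<lambda>i::nat. - int i) ` I2"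
      proof (cases "t \<ge> 1")
        case True
        then have "t = int (nat (t - 1)) + 1" by simp
        moreover have "nat (t - 1) \<in> I1" using t True by (simp add: I1_def)
        ultimately show ?thesis by blast
      next
        case False
        then have "t = - int (nat (- t))" by simp
        moreover have "nat (- t) \<in> I2" using t False by (simp add: I2_def)
        ultimately show ?thesis by blast
      qed
    qed (auto simp: I1_def I2_def)
    moreover have "card ((\<lambda>i::nat. int i + 1) ` I1 \<union> (\<lambda>i::nat. - int i) ` I2) = card I1 + card I2"
    proof (subst card_Un_disjoint)
      show "card ((\<lambda>i::nat. int i + 1) ` I1) + card ((\<lambda>i::nat. - int i) ` I2) = card I1 + card I2"
        by (subst card_image, simp add: inj_on_def)+ simp
    qed (use fin1 fin2 in auto)
    ultimately show ?thesis by simp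
  qed
  have "emeasure (two_walk_space :: ((nat \<Rightarrow> int^'d) \<times> (nat \<Rightarrow> int^'d)) measure) {\<omega>. \<forall>t\<in>J. Dstep \<omega> t = a t}
       = emeasure (step_space \<Otimes>\<^sub>M step_space) (C1 \<times> C2)"
    unfolding seteq two_walk_space_def ..
  also have "\<dots> = emeasure step_space C1 * emeasure step_space C2"
    by (rule sigma_finite_measure.emeasure_pair_measure_Times[OF sf sC1 sC2])
  also have "\<dots> = ennreal (?c ^ card J)"
    unfolding e1 e2 cardJ by (simp add: ennreal_mult'' power_add)
  finally show ?thesis .
qed

lemma AE_D_unit:
  "AE \<omega> in (two_walk_space :: ((nat \<Rightarrow> int^'d) \<times> (nat \<Rightarrow> int^'d)) measure). Dstep \<omega> t \<in> unit_steps"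
proof -
  let ?M = "two_walk_space :: ((nat \<Rightarrow> int^'d) \<times> (nat \<Rightarrow> int^'d)) measure"
  interpret prob_space ?M by (rule prob_space_two)
  have F: "(\<lambda>u. {\<omega>. \<forall>s\<in>{t}. Dstep \<omega> s = u}) ` unit_steps \<subseteq> sets ?M"
    using sets_cyl[of "{t}" "\<lambda>_. _"] by auto
  have dj: "disjoint_family_on (\<lambda>u. {\<omega>. \<forall>s\<in>{t}. Dstep \<omega> s = u}) unit_steps"
    by (auto simp: disjoint_family_on_def)
  have eq: "{\<omega> \<in> space ?M. Dstep \<omega> t \<in> unit_steps} = (\<Union>u\<in>unit_steps. {\<omega>. \<forall>s\<in>{t}. Dstep \<omega> s = u})"
    by auto
  have "emeasure ?M {\<omega> \<in> space ?M. Dstep \<omega> t \<in> unit_steps}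
      = (\<Sum>u\<in>unit_steps. emeasure ?M {\<omega>. \<forall>s\<in>{t}. Dstep \<omega> s = u})"
    unfolding eq by (rule sum_emeasure[OF F dj finite_unit_steps, symmetric])
  also have "\<dots> = (\<Sum>u\<in>(unit_steps::(int^'d) set). ennreal (1 / (2 * real CARD('d))))"
    by (rule sum.cong) (use emeasure_cyl[of "{t}" "\<lambda>_. _"] in auto)
  also have "\<dots> = ennreal (\<Sum>u\<in>(unit_steps::(int^'d) set). 1 / (2 * real CARD('d)))"
    by (rule sum_ennreal) simp
  also have "\<dots> = 1" by (simp add: card_unit_steps)
  finally have "emeasure ?M {\<omega> \<in> space ?M. Dstep \<omega> t \<in> unit_steps} = 1" .
  then have "prob {\<omega> \<in> space ?M. Dstep \<omega> t \<in> unit_steps} = 1"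
    by (simp add: emeasure_eq_measure)
  moreover have "{\<omega> \<in> space ?M. Dstep \<omega> t \<in> unit_steps} \<in> sets ?M"
    using F eq by (metis (no_types, lifting) image_subset_iff sets.countable_UN'' countable_finite finite_unit_steps)
  ultimately show ?thesis using prob_Collect_eq_1[of "\<lambda>\<omega>. Dstep \<omega> t \<in> unit_steps"] by simp
qed

lemma bridge:
  fixes P :: "(int \<Rightarrow> int^'d) \<Rightarrow> bool"
  assumes J: "finite J" and dep: "dep J P"
  shows "{\<omega> \<in> space two_walk_space. P (Dstep \<omega>)} \<in> sets (two_walk_space :: ((nat \<Rightarrow> int^'d) \<times> (nat \<Rightarrow> int^'d)) measure)"
    and "measure (two_walk_space :: ((nat \<Rightarrow> int^'d) \<times> (nat \<Rightarrow> int^'d)) measure) {\<omega> \<in> space two_walk_space. P (Dstep \<omega>)}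
         = measure_pmf.prob (Pi_pmf J undefined (\<lambda>_. pmf_of_set unit_steps)) {f. P f}"
proof -
  let ?M = "two_walk_space :: ((nat \<Rightarrow> int^'d) \<times> (nat \<Rightarrow> int^'d)) measure"
  let ?Q = "Pi_pmf J undefined (\<lambda>_. pmf_of_set (unit_steps :: (int^'d) set))"
  define R where "R \<omega> = restrict (Dstep \<omega>) J" for \<omega> :: "(nat \<Rightarrow> int^'d) \<times> (nat \<Rightarrow> int^'d)"
  have PR: "P (Dstep \<omega>) = P (R \<omega>)" for \<omega> by (rule depD[OF dep]) (simp add: R_def)
  have Rrange: "R \<omega> \<in> PiE J (\<lambda>_. UNIV)" for \<omega> by (simp add: R_def)
  have Rpre: "R -` {a} \<inter> space ?M = {\<omega> \<in> space ?M. \<forall>t\<in>J. Dstep \<omega> t = a t}"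
    if "a \<in> PiE J (\<lambda>_. UNIV)" for a
  proof -
    have "R \<omega> = a \<longleftrightarrow> (\<forall>t\<in>J. Dstep \<omega> t = a t)" for \<omega>
      using that by (auto simp: R_def PiE_def extensional_def fun_eq_iff)
    then show ?thesis by auto
  qed
  have Rmeas: "R \<in> ?M \<rightarrow>\<^sub>M count_space UNIV"
  proof (rule measurableI)
    fix A :: "(int \<Rightarrow> int^'d) set"
    have "R -` A \<inter> space ?M = (\<Union>a\<in>A \<inter> PiE J (\<lambda>_. UNIV). R -` {a} \<inter> space ?M)"
      using Rrange by auto
    also have "\<dots> \<in> sets ?M"
    proof (rule sets.countable_UN'')
      show "countable (A \<inter> PiE J (\<lambda>_. UNIV :: (int^'d) set))"
        by (rule countable_Int2, rule countable_PiE) (use J in auto)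
      fix a assume "a \<in> A \<inter> PiE J (\<lambda>_. UNIV :: (int^'d) set)"
      then show "R -` {a} \<inter> space ?M \<in> sets ?M" using Rpre sets_cyl[OF J] by auto
    qed
    finally show "R -` A \<inter> space ?M \<in> sets ?M" .
  qed simp
  have evt: "{\<omega> \<in> space ?M. P (Dstep \<omega>)} = R -` {f. P f} \<inter> space ?M" using PR by auto
  show "{\<omega> \<in> space ?M. P (Dstep \<omega>)} \<in> sets ?M"
    unfolding evt by (rule measurable_sets[OF Rmeas]) simp
  have setQ: "set_pmf ?Q = PiE J (\<lambda>_. unit_steps)"
    using J by (auto simp: set_Pi_pmf PiE_dflt_def PiE_def extensional_def)
  have distr_eq: "distr ?M (count_space UNIV) R = measure_pmf ?Q"
  proof (rule measure_eqI_countable_AE[where \<Omega> = "PiE J (\<lambda>_. unit_steps)"])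
    show "sets (distr ?M (count_space UNIV) R) = UNIV" by simp
    show "sets (measure_pmf ?Q) = UNIV" by simp
    show "countable (PiE J (\<lambda>_. unit_steps :: (int^'d) set))"
      by (rule countable_finite) (simp add: finite_PiE J)
    show "AE x in measure_pmf ?Q. x \<in> PiE J (\<lambda>_. unit_steps)"
      by (simp add: AE_measure_pmf_iff setQ)
    have "AE \<omega> in ?M. \<forall>t\<in>J. Dstep \<omega> t \<in> unit_steps"
      by (rule AE_finite_allI[OF J]) (rule AE_D_unit)
    then have "AE \<omega> in ?M. R \<omega> \<in> PiE J (\<lambda>_. unit_steps)"
      by eventually_elim (auto simp: R_def)
    then show "AE x in distr ?M (count_space UNIV) R. x \<in> PiE J (\<lambda>_. unit_steps)"
      by (subst AE_distr_iff[OF Rmeas]) auto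
  next
    fix a assume a: "a \<in> PiE J (\<lambda>_. unit_steps :: (int^'d) set)"
    then have a': "a \<in> PiE J (\<lambda>_. UNIV)" by (auto simp: PiE_def)
    have "emeasure (distr ?M (count_space UNIV) R) {a} = emeasure ?M (R -` {a} \<inter> space ?M)"
      by (rule emeasure_distr[OF Rmeas]) simp
    also have "\<dots> = emeasure ?M {\<omega>. \<forall>t\<in>J. Dstep \<omega> t = a t}"
      unfolding Rpre[OF a'] by simp
    also have "\<dots> = ennreal ((1 / (2 * real CARD('d))) ^ card J)"
      by (rule emeasure_cyl[OF J]) (use a in auto)
    also have "\<dots> = ennreal (pmf ?Q a)"
    proof -
      have "pmf ?Q a = (\<Prod>t\<in>J. pmf (pmf_of_set (unit_steps :: (int^'d) set)) (a t))"
        by (rule pmf_Pi') (use J a in \<open>auto simp: PiE_def extensional_def\<close>)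
      also have "\<dots> = (\<Prod>t\<in>J. 1 / (2 * real CARD('d)))"
        by (rule prod.cong) (use a in \<open>auto simp: card_unit_steps dest: PiE_mem\<close>)
      finally show ?thesis by simp
    qed
    also have "\<dots> = emeasure (measure_pmf ?Q) {a}" by (simp add: emeasure_pmf_single)
    finally show "emeasure (distr ?M (count_space UNIV) R) {a} = emeasure (measure_pmf ?Q) {a}" .
  qed
  have "measure ?M {\<omega> \<in> space ?M. P (Dstep \<omega>)} = measure ?M (R -` {f. P f} \<inter> space ?M)"
    unfolding evt ..
  also have "\<dots> = measure (distr ?M (count_space UNIV) R) {f. P f}"
    by (rule measure_distr[OF Rmeas, symmetric]) simp
  also have "\<dots> = measure_pmf.prob ?Q {f. P f}" unfolding distr_eq ..
  finally show "measure ?M {\<omega> \<in> space ?M. P (Dstep \<omega>)} = measure_pmf.prob ?Q {f. P f}" .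
qed

section \<open>Geometry of the two-sided walk\<close>

lemma two_sided_step: "two_sided \<omega> t - two_sided \<omega> (t - 1) = Dstep \<omega> t"
proof (cases "t \<ge> 1")
  case True
  then have "nat t = Suc (nat (t - 1))" by simp
  then show ?thesis using True by (simp add: two_sided_def Dstep_def walk_def)
next
  case False
  show ?thesis
  proof (cases "t = 0")
    case True
    then show ?thesis by (simp add: two_sided_def Dstep_def walk_def)
  next
    case False
    then have "t < 0" using \<open>\<not> t \<ge> 1\<close> by simp
    then have "nat (- (t - 1)) = Suc (nat (- t))" by simp
    then show ?thesis using \<open>t < 0\<close> by (simp add: two_sided_def Dstep_def walk_def)
  qed
qed

lemma two_sided_diff_nat: "two_sided \<omega> (a + int n) - two_sided \<omega> a = (\<Sum>t\<in>{a<..a + int n}. Dstep \<omega> t)"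
proof (induction n)
  case 0
  then show ?case by simp
next
  case (Suc n)
  have s: "{a<..a + int (Suc n)} = insert (a + int n + 1) {a<..a + int n}" by auto
  have "two_sided \<omega> (a + int (Suc n)) - two_sided \<omega> a =
        (two_sided \<omega> (a + int n + 1) - two_sided \<omega> (a + int n)) + (two_sided \<omega> (a + int n) - two_sided \<omega> a)"
    by (simp add: algebra_simps)
  also have "two_sided \<omega> (a + int n + 1) - two_sided \<omega> (a + int n) = Dstep \<omega> (a + int n + 1)"
    using two_sided_step[of \<omega> "a + int n + 1"] by simp
  finally show ?case unfolding s by (simp add: Suc.IH)
qed

lemma two_sided_diff:
  assumes "a \<le> b"
  shows "two_sided \<omega> b - two_sided \<omega> a = (\<Sum>t\<in>{a<..b}. Dstep \<omega> t)"
  using two_sided_diff_nat[of \<omega> a "nat (b - a)"] assms by simp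

lemma disj_iff:
  "(two_sided \<omega> ` {.. j} \<inter> two_sided \<omega> ` {j + 1 ..} = {}) \<longleftrightarrow>
   (\<forall>a b. a \<le> j \<longrightarrow> j < b \<longrightarrow> (\<Sum>t\<in>{a<..b}. Dstep \<omega> t) \<noteq> 0)"
proof -
  have eqv: "two_sided \<omega> a = two_sided \<omega> b \<longleftrightarrow> (\<Sum>t\<in>{a<..b}. Dstep \<omega> t) = 0" if "a \<le> b" for a b
    using two_sided_diff[OF that, of \<omega>] by (metis eq_iff_diff_eq_0)
  show ?thesis
  proof
    assume d: "two_sided \<omega> ` {.. j} \<inter> two_sided \<omega> ` {j + 1 ..} = {}"
    show "\<forall>a b. a \<le> j \<longrightarrow> j < b \<longrightarrow> (\<Sum>t\<in>{a<..b}. Dstep \<omega> t) \<noteq> 0"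
    proof (intro allI impI notI)
      fix a b assume ab: "a \<le> j" "j < b" "(\<Sum>t\<in>{a<..b}. Dstep \<omega> t) = 0"
      have "a \<le> b" using ab by simp
      then have "two_sided \<omega> a = two_sided \<omega> b" using eqv[of a b] ab by simp
      moreover have "two_sided \<omega> a \<in> two_sided \<omega> ` {.. j}" using ab by simp
      moreover have "two_sided \<omega> b \<in> two_sided \<omega> ` {j + 1 ..}" using ab by simp
      ultimately show False using d by auto
    qed
  next
    assume h: "\<forall>a b. a \<le> j \<longrightarrow> j < b \<longrightarrow> (\<Sum>t\<in>{a<..b}. Dstep \<omega> t) \<noteq> 0"
    show "two_sided \<omega> ` {.. j} \<inter> two_sided \<omega> ` {j + 1 ..} = {}"
    proof (rule ccontr)
      assume "two_sided \<omega> ` {.. j} \<inter> two_sided \<omega> ` {j + 1 ..} \<noteq> {}"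
      then obtain a b where ab: "a \<le> j" "b \<ge> j + 1" "two_sided \<omega> a = two_sided \<omega> b" by auto
      have "a \<le> b" using ab by simp
      then have "(\<Sum>t\<in>{a<..b}. Dstep \<omega> t) = 0" using eqv[of a b] ab by simp
      then show False using h ab by auto
    qed
  qed
qed

lemma pair_count:
  fixes g :: "nat \<Rightarrow> real" and j :: int and m :: nat
  assumes g: "\<And>l. g l \<ge> 0"
  shows "(\<Sum>a\<in>{j - int m..j}. \<Sum>b\<in>{j+1..j + int m}. g (nat (b - a))) \<le> (\<Sum>l\<in>{1..2*m}. real l * g l)"
proof -
  let ?A = "{j - int m..j}" and ?B = "{j+1..j + int m}"
  let ?\<psi> = "\<lambda>(a::int, b::int). (nat (b - a), nat (j - a))"
  let ?S = "Sigma {1..2*m} (\<lambda>l. {..<l})"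
  have inj: "inj_on ?\<psi> (?A \<times> ?B)"
  proof (rule inj_onI)
    fix p q assume h: "p \<in> ?A \<times> ?B" "q \<in> ?A \<times> ?B" "?\<psi> p = ?\<psi> q"
    then show "p = q" by (cases p, cases q) auto
  qed
  have sub: "?\<psi> ` (?A \<times> ?B) \<subseteq> ?S" by auto
  have "(\<Sum>a\<in>?A. \<Sum>b\<in>?B. g (nat (b - a))) = (\<Sum>p\<in>?A \<times> ?B. g (fst (?\<psi> p)))"
    by (simp add: sum.cartesian_product case_prod_beta)
  also have "\<dots> = (\<Sum>q\<in>?\<psi> ` (?A \<times> ?B). g (fst q))"
    by (rule sum.reindex[OF inj, symmetric, unfolded comp_def])
  also have "\<dots> \<le> (\<Sum>q\<in>?S. g (fst q))"
    by (rule sum_mono2) (use sub g in auto)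
  also have "\<dots> = (\<Sum>(l,i)\<in>?S. g l)" by (simp add: case_prod_beta)
  also have "\<dots> = (\<Sum>l\<in>{1..2*m}. \<Sum>i\<in>{..<l}. g l)"
    by (rule sum.Sigma[symmetric]) auto
  also have "\<dots> = (\<Sum>l\<in>{1..2*m}. real l * g l)" by simp
  finally show ?thesis .
qed

lemma powr_tele:
  fixes s :: real and l :: nat
  assumes "s > 1" "l \<ge> 2"
  shows "real l powr (- s) \<le> (real (l - 1) powr (1 - s) - real l powr (1 - s)) / (s - 1)"
proof -
  let ?f = "\<lambda>x::real. x powr (1 - s)"
  have a: "real (l - 1) < real l" "real (l - 1) > 0" using assms by auto
  have "\<exists>z>real (l - 1). z < real l \<and> ?f (real l) - ?f (real (l - 1)) = (real l - real (l - 1)) * ((1 - s) * z powr (1 - s - 1))"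
  proof (rule MVT2[OF a(1), of ?f "\<lambda>x. (1 - s) * x powr (1 - s - 1)"])
    fix x assume "real (l - 1) \<le> x" "x \<le> real l"
    then have "x > 0" using a by linarith
    then show "(?f has_real_derivative (1 - s) * x powr (1 - s - 1)) (at x)"
      by (rule has_real_derivative_powr)
  qed
  then obtain z where z: "z > real (l - 1)" "z < real l"
    and eq: "?f (real l) - ?f (real (l - 1)) = (real l - real (l - 1)) * ((1 - s) * z powr (1 - s - 1))"
    by blast
  have l1: "real l - real (l - 1) = 1" using assms by simp
  have zpos: "z > 0" using z a by linarith
  have "real l powr (- s) \<le> z powr (- s)"
    by (intro powr_mono2') (use zpos z assms in auto)
  also have "z powr (- s) = (?f (real (l - 1)) - ?f (real l)) / (s - 1)"
    using eq l1 assms by (simp add: field_simps)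
  finally show ?thesis .
qed

lemma tail_sum:
  fixes s :: real and L M :: nat
  assumes "s > 1" "L \<ge> 1"
  shows "(\<Sum>l\<in>{L+1..M}. real l powr (- s)) \<le> real L powr (1 - s) / (s - 1)"
proof (cases "M \<ge> L")
  case True
  have "(\<Sum>l\<in>{L+1..M}. real l powr (- s)) \<le> (real L powr (1 - s) - real M powr (1 - s)) / (s - 1)"
    using True
  proof (induction M rule: dec_induct)
    case base
    then show ?case by simp
  next
    case (step M)
    have "{L+1..Suc M} = insert (Suc M) {L+1..M}" using step by auto
    then have "(\<Sum>l\<in>{L+1..Suc M}. real l powr (- s)) = real (Suc M) powr (- s) + (\<Sum>l\<in>{L+1..M}. real l powr (- s))"
      by simp
    also have "\<dots> \<le> (real M powr (1 - s) - real (Suc M) powr (1 - s)) / (s - 1) +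
                    (real L powr (1 - s) - real M powr (1 - s)) / (s - 1)"
      using powr_tele[OF assms(1), of "Suc M"] step assms by (intro add_mono) auto
    also have "\<dots> = (real L powr (1 - s) - real (Suc M) powr (1 - s)) / (s - 1)"
      by (simp add: add_divide_distrib[symmetric])
    finally show ?case .
  qed
  also have "\<dots> \<le> real L powr (1 - s) / (s - 1)"
    using assms by (intro divide_right_mono) auto
  finally show ?thesis .
next
  case False
  then have "{L+1..M} = {}" by auto
  then show ?thesis using assms by simp
qed

section \<open>Local events\<close>

abbreviation PU :: "int set \<Rightarrow> (int \<Rightarrow> int^'d) pmf" where
  "PU J \<equiv> Pi_pmf J undefined (\<lambda>_. pmf_of_set unit_steps)"

definition Zev :: "int \<Rightarrow> int \<Rightarrow> (int \<Rightarrow> int^'d) \<Rightarrow> bool" where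
  "Zev a b f \<longleftrightarrow> (\<Sum>t\<in>{a<..b}. f t) = 0"

definition Mev :: "nat \<Rightarrow> int \<Rightarrow> (int \<Rightarrow> int^'d) \<Rightarrow> bool" where
  "Mev m j f \<longleftrightarrow> (\<forall>a\<in>{j - int m..j}. \<forall>b\<in>{j+1..j + int m}. \<not> Zev a b f)"

definition eone :: "int^'d" where "eone = evec undefined 1"

lemma eone_unit: "eone \<in> unit_steps"
  unfolding eone_def unit_steps_eq by auto

lemma dep_Zev: "dep {a<..b} (Zev a b)"
  unfolding Zev_def by (rule dep_sum_eq)

lemma dep_Mev: "dep {j - int m<..j + int m} (Mev m j)"
proof (rule depI)
  fix f g :: "int \<Rightarrow> int^'d" assume h: "\<And>x. x \<in> {j - int m<..j + int m} \<Longrightarrow> f x = g x"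
  have "Zev a b f = Zev a b g" if "a \<in> {j - int m..j}" "b \<in> {j+1..j + int m}" for a b
    by (rule depD[OF dep_Zev]) (use h that in auto)
  then show "Mev m j f = Mev m j g" by (auto simp: Mev_def)
qed

lemma card_ioc: "card {a<..b::int} = nat (b - a)"
  by simp

lemma sum_eone:
  assumes "finite T" "\<forall>t\<in>T. f t = eone"
  shows "(\<Sum>t\<in>T. f t) = evec undefined (int (card T))"
proof -
  have "(\<Sum>t\<in>T. f t) = (\<Sum>t\<in>T. eone)" using assms by (intro sum.cong) auto
  then show ?thesis by (simp add: vec_eq_iff sum_component eone_def of_nat_index)
qed

definition Hf :: "nat \<Rightarrow> nat \<Rightarrow> nat \<Rightarrow> real" where
  "Hf d L l = (if 2 * L \<le> l then Chk d * 2 powr (real d / 2) * real l powr (- (real d / 2)) else 0)"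

lemma Hf_nonneg: "d > 0 \<Longrightarrow> Hf d L l \<ge> 0"
  using Chk_pos[of d] by (auto simp: Hf_def)

lemma pair_bound:
  fixes W :: "int set" and j a b :: int and L :: nat
  assumes W: "finite W" and L: "L \<ge> 1" and SW: "{j - int L<..j + int L} \<subseteq> W" and abW: "{a<..b} \<subseteq> W"
    and ab: "a \<le> j" "j < b"
  shows "measure_pmf.prob (PU W :: (int \<Rightarrow> int^'d) pmf) {f. (\<forall>t\<in>{j - int L<..j + int L}. f t = eone) \<and> Zev a b f}
         \<le> (1 / (2 * real CARD('d))) ^ (2 * L) * Hf CARD('d) L (nat (b - a))"
proof -
  let ?S = "{j - int L<..j + int L}"
  let ?A = "\<lambda>f::int \<Rightarrow> int^'d. \<forall>t\<in>?S. f t = eone"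
  let ?c = "1 / (2 * real CARD('d))"
  define T where "T = {a<..b} \<inter> ?S"
  define F where "F = {a<..b} - ?S"
  define r where "r = card T"
  define y where "y = (evec undefined (- int r) :: int^'d)"
  have finT: "finite T" "finite F" by (auto simp: T_def F_def)
  have incl: "{f. ?A f \<and> Zev a b f} \<subseteq> {f. ?A f \<and> (\<Sum>t\<in>F. f t) = y}"
  proof (intro subsetI CollectI)
    fix f :: "int \<Rightarrow> int^'d" assume "f \<in> {f. ?A f \<and> Zev a b f}"
    then have hA: "?A f" and hZ: "Zev a b f" by auto
    have "(\<Sum>t\<in>{a<..b}. f t) = (\<Sum>t\<in>T. f t) + (\<Sum>t\<in>F. f t)"
      unfolding T_def F_def by (rule sum.Int_Diff) simp
    moreover have "(\<Sum>t\<in>T. f t) = evec undefined (int r)"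
      unfolding r_def by (rule sum_eone) (use hA finT in \<open>auto simp: T_def\<close>)
    ultimately have "(\<Sum>t\<in>F. f t) = - evec undefined (int r)" using hZ
      by (simp add: Zev_def) (metis add.commute eq_neg_iff_add_eq_0)
    then show "?A f \<and> (\<Sum>t\<in>F. f t) = y" using hA by (simp add: y_def vec_eq_iff)
  qed
  have dS: "dep ?S ?A" by (rule depI) auto
  have dF: "dep (W - ?S) (\<lambda>f::int \<Rightarrow> int^'d. (\<Sum>t\<in>F. f t) = y)"
    by (rule dep_mono[OF dep_sum_eq]) (use abW in \<open>auto simp: F_def\<close>)
  have eqW: "?S \<union> (W - ?S) = W" using SW by auto
  have est: "measure_pmf.prob (PU F :: (int \<Rightarrow> int^'d) pmf) {f. (\<Sum>t\<in>F. f t) = y} \<le> Hf CARD('d) L (nat (b - a))"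
  proof -
    have jT: "j + 1 \<in> T" using ab L by (auto simp: T_def)
    then have r1: "r \<ge> 1" using finT by (auto simp: r_def Suc_le_eq card_gt_0_iff)
    have TF: "T \<union> F = {a<..b}" "T \<inter> F = {}" by (auto simp: T_def F_def)
    have card_ab: "nat (b - a) = r + card F"
      using card_Un_disjoint[OF finT TF(2)] TF(1) by (simp add: r_def)
    show ?thesis
    proof (cases "card F < r")
      case True
      have "measure_pmf.prob (PU F :: (int \<Rightarrow> int^'d) pmf) {f. (\<Sum>t\<in>F. f t) = y} = 0"
        by (rule sum_far_zero[where k = undefined]) (use finT True in \<open>auto simp: y_def\<close>)
      then show ?thesis using Hf_nonneg[of "CARD('d)"] by simp
    next
      case False
      then have Fr: "r \<le> card F" by simp
      then have "card F > 0" using r1 by simp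
      then obtain t where t: "t \<in> F" by (metis card_gt_0_iff ex_in_conv)
      have rL: "r \<ge> L"
      proof (cases "t \<le> j - int L")
        case True
        have "{j - int L<..j + 1} \<subseteq> T" using t True ab L by (auto simp: T_def F_def)
        then have "card {j - int L<..j + 1} \<le> r" unfolding r_def by (rule card_mono[OF finT(1)])
        then show ?thesis by simp
      next
        case False
        then have "t > j + int L" using t by (auto simp: F_def)
        then have "{j<..j + int L} \<subseteq> T" using t ab L by (auto simp: T_def F_def)
        then have "card {j<..j + int L} \<le> r" unfolding r_def by (rule card_mono[OF finT(1)])
        then show ?thesis by simp
      qed
      let ?l = "nat (b - a)"
      have l2L: "2 * L \<le> ?l" using card_ab Fr rL by simp
      have half: "real (card F) \<ge> real ?l / 2" using card_ab Fr by simp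
      have lpos: "real ?l > 0" using l2L L by simp
      have "measure_pmf.prob (PU F :: (int \<Rightarrow> int^'d) pmf) {f. (\<Sum>t\<in>F. f t) = y}
            \<le> Chk CARD('d) * real (card F) powr (- (real CARD('d) / 2))"
        by (rule HK_bound) (use finT \<open>card F > 0\<close> in auto)
      also have "real (card F) powr (- (real CARD('d) / 2)) \<le> (real ?l / 2) powr (- (real CARD('d) / 2))"
        by (rule powr_mono2') (use half lpos in auto)
      also have "(real ?l / 2) powr (- (real CARD('d) / 2)) = 2 powr (real CARD('d) / 2) * real ?l powr (- (real CARD('d) / 2))"
        using lpos by (simp add: powr_divide powr_minus field_simps)
      finally have "measure_pmf.prob (PU F :: (int \<Rightarrow> int^'d) pmf) {f. (\<Sum>t\<in>F. f t) = y}
            \<le> Chk CARD('d) * (2 powr (real CARD('d) / 2) * real ?l powr (- (real CARD('d) / 2)))"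
        using Chk_pos[of "CARD('d)"] by (simp add: mult_left_mono)
      then show ?thesis using l2L by (simp add: Hf_def mult.assoc)
    qed
  qed
  have "measure_pmf.prob (PU W :: (int \<Rightarrow> int^'d) pmf) {f. ?A f \<and> Zev a b f}
      \<le> measure_pmf.prob (PU W) {f. ?A f \<and> (\<Sum>t\<in>F. f t) = y}"
    by (rule measure_pmf.finite_measure_mono[OF incl]) simp
  also have "\<dots> = measure_pmf.prob (PU (?S \<union> (W - ?S))) {f. ?A f \<and> (\<Sum>t\<in>F. f t) = y}"
    using eqW by simp
  also have "\<dots> = measure_pmf.prob (PU ?S) {f. ?A f} * measure_pmf.prob (PU (W - ?S)) {f. (\<Sum>t\<in>F. f t) = y}"
    by (rule prob_Pi_pmf_indep[OF _ _ _ dS dF]) (use W in auto)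
  also have "measure_pmf.prob (PU ?S) {f. ?A f} = ?c ^ (2*L)"
    using prob_const_segment[OF _ eone_unit, of ?S undefined] by (simp add: nat_mult_distrib)
  also have "measure_pmf.prob (PU (W - ?S)) {f. (\<Sum>t\<in>F. f t) = y} = measure_pmf.prob (PU F) {f. (\<Sum>t\<in>F. f t) = y}"
    by (rule prob_Pi_pmf_subset[OF _ _ dep_sum_eq]) (use W abW in \<open>auto simp: F_def\<close>)
  finally show ?thesis using est by (meson mult_left_mono order_trans zero_le_divide_1_iff zero_le_power of_nat_0_le_iff mult_nonneg_nonneg zero_le_numeral)
qed

lemma Hf_sum_bound:
  fixes d L m :: nat
  assumes d5: "d \<ge> 5" and L: "L \<ge> 1"
  shows "(\<Sum>l\<in>{1..2*m}. real l * Hf d L l)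
         \<le> Chk d * 2 powr (real d / 2) * (real (2*L - 1) powr (2 - real d / 2) / (real d / 2 - 2))"
proof -
  let ?K = "Chk d * 2 powr (real d / 2)"
  let ?s = "real d / 2 - 1"
  have "(\<Sum>l\<in>{1..2*m}. real l * Hf d L l) = (\<Sum>l\<in>{1..2*m}. if 2*L \<le> l then ?K * real l powr (- ?s) else 0)"
  proof (rule sum.cong)
    fix l assume l: "l \<in> {1..2*m}"
    have "real l * real l powr (- (real d / 2)) = real l powr (1 + - (real d / 2))"
      using l by (intro powr_mult_base) auto
    also have "1 + - (real d / 2) = - ?s" by simp
    finally show "real l * Hf d L l = (if 2*L \<le> l then ?K * real l powr (- ?s) else 0)"
      by (simp add: Hf_def algebra_simps)
  qed simp
  also have "\<dots> = (\<Sum>l\<in>{l\<in>{1..2*m}. 2*L \<le> l}. ?K * real l powr (- ?s))"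
    by (rule sum.inter_filter[symmetric]) simp
  also have "{l\<in>{1..2*m}. 2*L \<le> l} = {(2*L - 1) + 1..2*m}" using L by auto
  also have "(\<Sum>l\<in>{(2*L - 1) + 1..2*m}. ?K * real l powr (- ?s)) = ?K * (\<Sum>l\<in>{(2*L - 1) + 1..2*m}. real l powr (- ?s))"
    by (simp add: sum_distrib_left)
  also have "\<dots> \<le> ?K * (real (2*L - 1) powr (1 - ?s) / (?s - 1))"
  proof (rule mult_left_mono)
    show "(\<Sum>l\<in>{(2*L - 1) + 1..2*m}. real l powr (- ?s)) \<le> real (2*L - 1) powr (1 - ?s) / (?s - 1)"
      by (rule tail_sum) (use d5 L in auto)
    show "0 \<le> ?K" using Chk_pos[of d] d5 by simp
  qed
  also have "1 - ?s = 2 - real d / 2" by simp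
  also have "?s - 1 = real d / 2 - 2" by simp
  finally show ?thesis .
qed

lemma local_lower:
  fixes j :: int and m L :: nat
  assumes d5: "CARD('d) \<ge> 5" and L: "L \<ge> 1" and mL: "L \<le> m"
  shows "measure_pmf.prob (PU {j - int m<..j + int m} :: (int \<Rightarrow> int^'d) pmf) {f. Mev m j f}
     \<ge> (1 / (2 * real CARD('d))) ^ (2 * L) *
        (1 - Chk CARD('d) * 2 powr (real CARD('d) / 2) * (real (2*L - 1) powr (2 - real CARD('d) / 2) / (real CARD('d) / 2 - 2)))"
proof -
  let ?d = "CARD('d)"
  let ?W = "{j - int m<..j + int m}"
  let ?S = "{j - int L<..j + int L}"
  let ?A = "\<lambda>f::int \<Rightarrow> int^'d. \<forall>t\<in>?S. f t = eone"
  let ?c = "1 / (2 * real ?d)"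
  let ?P = "{j - int m..j} \<times> {j+1..j + int m}"
  let ?Bd = "Chk ?d * 2 powr (real ?d / 2) * (real (2*L - 1) powr (2 - real ?d / 2) / (real ?d / 2 - 2))"
  let ?Q = "PU ?W :: (int \<Rightarrow> int^'d) pmf"
  have finW: "finite ?W" by simp
  have SW: "?S \<subseteq> ?W" using mL by auto
  have cover: "{f. ?A f} \<subseteq> {f. Mev m j f} \<union> (\<Union>p\<in>?P. {f. ?A f \<and> Zev (fst p) (snd p) f})"
    by (auto simp: Mev_def)
  have "measure_pmf.prob ?Q (\<Union>p\<in>?P. {f. ?A f \<and> Zev (fst p) (snd p) f})
      \<le> (\<Sum>p\<in>?P. measure_pmf.prob ?Q {f. ?A f \<and> Zev (fst p) (snd p) f})"
    by (rule measure_pmf.finite_measure_subadditive_finite) auto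
  also have "\<dots> \<le> (\<Sum>p\<in>?P. ?c ^ (2*L) * Hf ?d L (nat (snd p - fst p)))"
  proof (rule sum_mono)
    fix p assume p: "p \<in> ?P"
    show "measure_pmf.prob ?Q {f. ?A f \<and> Zev (fst p) (snd p) f} \<le> ?c ^ (2*L) * Hf ?d L (nat (snd p - fst p))"
      by (rule pair_bound[OF finW L SW]) (use p in auto)
  qed
  also have "\<dots> = ?c ^ (2*L) * (\<Sum>a\<in>{j - int m..j}. \<Sum>b\<in>{j+1..j + int m}. Hf ?d L (nat (b - a)))"
    by (simp add: sum.cartesian_product sum_distrib_left case_prod_beta)
  also have "\<dots> \<le> ?c ^ (2*L) * ?Bd"
  proof (rule mult_left_mono)
    have "(\<Sum>a\<in>{j - int m..j}. \<Sum>b\<in>{j+1..j + int m}. Hf ?d L (nat (b - a))) \<le> (\<Sum>l\<in>{1..2*m}. real l * Hf ?d L l)"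
      by (rule pair_count) (rule Hf_nonneg, simp)
    also have "\<dots> \<le> ?Bd" by (rule Hf_sum_bound[OF d5 L])
    finally show "(\<Sum>a\<in>{j - int m..j}. \<Sum>b\<in>{j+1..j + int m}. Hf ?d L (nat (b - a))) \<le> ?Bd" .
  qed simp
  finally have sumb: "measure_pmf.prob ?Q (\<Union>p\<in>?P. {f. ?A f \<and> Zev (fst p) (snd p) f}) \<le> ?c ^ (2*L) * ?Bd" .
  have "measure_pmf.prob ?Q {f. ?A f} \<le> measure_pmf.prob ?Q ({f. Mev m j f} \<union> (\<Union>p\<in>?P. {f. ?A f \<and> Zev (fst p) (snd p) f}))"
    by (rule measure_pmf.finite_measure_mono[OF cover]) simp
  also have "\<dots> \<le> measure_pmf.prob ?Q {f. Mev m j f} + measure_pmf.prob ?Q (\<Union>p\<in>?P. {f. ?A f \<and> Zev (fst p) (snd p) f})"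
    by (rule measure_Un_le) simp_all
  also have "\<dots> \<le> measure_pmf.prob ?Q {f. Mev m j f} + ?c ^ (2*L) * ?Bd"
    using sumb by simp
  finally have main: "measure_pmf.prob ?Q {f. ?A f} \<le> measure_pmf.prob ?Q {f. Mev m j f} + ?c ^ (2*L) * ?Bd" .
  have "measure_pmf.prob ?Q {f. ?A f} = measure_pmf.prob (PU ?S :: (int \<Rightarrow> int^'d) pmf) {f. ?A f}"
    by (rule prob_Pi_pmf_subset[OF finW SW]) (rule depI, auto)
  also have "\<dots> = ?c ^ (2*L)"
    using prob_const_segment[OF _ eone_unit, of ?S undefined] by (simp add: nat_mult_distrib)
  finally have "?c ^ (2*L) \<le> measure_pmf.prob ?Q {f. Mev m j f} + ?c ^ (2*L) * ?Bd" using main by simp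
  then show ?thesis by (simp add: algebra_simps)
qed

lemma exists_L:
  fixes d :: nat
  assumes d5: "d \<ge> 5"
  shows "\<exists>L::nat. L \<ge> 1 \<and> Chk d * 2 powr (real d / 2) * (real (2*L - 1) powr (2 - real d / 2) / (real d / 2 - 2)) \<le> 1/2"
proof -
  define K0 where "K0 = 2 * (Chk d * 2 powr (real d / 2)) / (real d / 2 - 2)"
  have K0: "K0 > 0" using Chk_pos[of d] d5 by (simp add: K0_def)
  obtain L :: nat where L: "K0^2 + 1 < real L" using reals_Archimedean2 by blast
  have "K0^2 \<ge> 0" by simp
  then have "real L > 0" using L by linarith
  then have L1: "L \<ge> 1" by simp
  let ?x = "real (2*L - 1)"
  have x: "?x \<ge> real L" using L1 by simp
  have x1: "?x \<ge> 1" using x L1 by simp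
  have xK: "?x > K0^2" using x L by simp
  have "?x powr (2 - real d / 2) \<le> ?x powr (- (1/2))"
    by (rule powr_mono) (use d5 x1 in auto)
  also have "\<dots> = 1 / sqrt ?x" using x1 by (simp add: powr_minus_divide powr_half_sqrt)
  also have "\<dots> \<le> 1 / sqrt (K0^2)"
    by (intro divide_left_mono real_sqrt_le_mono) (use xK K0 x1 in auto)
  also have "\<dots> = 1 / K0" using K0 by simp
  finally have "?x powr (2 - real d / 2) \<le> 1 / K0" .
  then have "(K0 / 2) * ?x powr (2 - real d / 2) \<le> (K0 / 2) * (1 / K0)"
    using K0 by (intro mult_left_mono) auto
  also have "\<dots> = 1/2" using K0 by simp
  finally have "(K0 / 2) * ?x powr (2 - real d / 2) \<le> 1/2" .
  moreover have "Chk d * 2 powr (real d / 2) * (?x powr (2 - real d / 2) / (real d / 2 - 2)) = (K0 / 2) * ?x powr (2 - real d / 2)"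
  proof -
    have ne: "real d / 2 - 2 \<noteq> 0" using d5 by simp
    show ?thesis unfolding K0_def using ne by (simp add: field_simps)
  qed
  ultimately show ?thesis using L1 by (intro exI[of _ L]) auto
qed

lemma far_sum_bound:
  fixes d m R :: nat
  assumes d5: "d \<ge> 5" and m: "m \<ge> 1"
  shows "(\<Sum>l\<in>{1..2*R}. real l * (if m < l then Chk d * real l powr (- (real d / 2)) else 0))
         \<le> Chk d * (real m powr (2 - real d / 2) / (real d / 2 - 2))"
proof -
  let ?s = "real d / 2 - 1"
  have "(\<Sum>l\<in>{1..2*R}. real l * (if m < l then Chk d * real l powr (- (real d / 2)) else 0))
      = (\<Sum>l\<in>{1..2*R}. if m < l then Chk d * real l powr (- ?s) else 0)"
  proof (rule sum.cong)
    fix l assume l: "l \<in> {1..2*R}"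
    have "real l * real l powr (- (real d / 2)) = real l powr (1 + - (real d / 2))"
      using l by (intro powr_mult_base) auto
    also have "1 + - (real d / 2) = - ?s" by simp
    finally show "real l * (if m < l then Chk d * real l powr (- (real d / 2)) else 0) = (if m < l then Chk d * real l powr (- ?s) else 0)"
      by (simp add: algebra_simps)
  qed simp
  also have "\<dots> = (\<Sum>l\<in>{l\<in>{1..2*R}. m < l}. Chk d * real l powr (- ?s))"
    by (rule sum.inter_filter[symmetric]) simp
  also have "{l\<in>{1..2*R}. m < l} = {m + 1..2*R}" using m by auto
  also have "(\<Sum>l\<in>{m + 1..2*R}. Chk d * real l powr (- ?s)) = Chk d * (\<Sum>l\<in>{m + 1..2*R}. real l powr (- ?s))"
    by (simp add: sum_distrib_left)
  also have "\<dots> \<le> Chk d * (real m powr (1 - ?s) / (?s - 1))"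
  proof (rule mult_left_mono)
    show "(\<Sum>l\<in>{m + 1..2*R}. real l powr (- ?s)) \<le> real m powr (1 - ?s) / (?s - 1)"
      by (rule tail_sum) (use d5 m in auto)
    show "0 \<le> Chk d" using Chk_pos[of d] d5 by simp
  qed
  also have "1 - ?s = 2 - real d / 2" by simp
  also have "?s - 1 = real d / 2 - 2" by simp
  finally show ?thesis .
qed

lemma dep_conj_const: "dep J P \<Longrightarrow> dep J (\<lambda>f. Q \<and> P f)"
  unfolding dep_def by blast

abbreviation TW :: "((nat \<Rightarrow> int^'d) \<times> (nat \<Rightarrow> int^'d)) measure" where
  "TW \<equiv> two_walk_space"

lemma prob_Z:
  fixes a b :: int
  assumes "a < b"
  shows "measure_pmf.prob (PU {a<..b} :: (int \<Rightarrow> int^'d) pmf) {f. Zev a b f}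
         \<le> Chk CARD('d) * real (nat (b - a)) powr (- (real CARD('d) / 2))"
  unfolding Zev_def using HK_bound[of "{a<..b}" undefined 0] assms by simp

lemma far_bound:
  fixes j :: int and m :: nat
  assumes d5: "CARD('d) \<ge> 5" and m: "m \<ge> 1"
  shows "{\<omega> \<in> space TW. \<exists>a b. a \<le> j \<and> j < b \<and> int m < b - a \<and> Zev a b (Dstep \<omega>)} \<in> sets (TW :: ((nat \<Rightarrow> int^'d) \<times> (nat \<Rightarrow> int^'d)) measure)"
    and "measure (TW :: ((nat \<Rightarrow> int^'d) \<times> (nat \<Rightarrow> int^'d)) measure)
          {\<omega> \<in> space TW. \<exists>a b. a \<le> j \<and> j < b \<and> int m < b - a \<and> Zev a b (Dstep \<omega>)}
        \<le> Chk CARD('d) * (real m powr (2 - real CARD('d) / 2) / (real CARD('d) / 2 - 2))"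
proof -
  let ?M = "TW :: ((nat \<Rightarrow> int^'d) \<times> (nat \<Rightarrow> int^'d)) measure"
  let ?d = "CARD('d)"
  let ?B = "Chk ?d * (real m powr (2 - real ?d / 2) / (real ?d / 2 - 2))"
  define E where "E = (\<lambda>(a, b). {\<omega> \<in> space ?M. int m < b - a \<and> Zev a b (Dstep \<omega>)})"
  define P where "P = (\<lambda>R::nat. {j - int R..j} \<times> {j+1..j + int R})"
  define F where "F = (\<lambda>R::nat. \<Union>p\<in>P R. E p)"
  have Esets: "E p \<in> sets ?M" for p
  proof -
    obtain a b where p: "p = (a, b)" by fastforce
    have "{\<omega> \<in> space ?M. int m < b - a \<and> Zev a b (Dstep \<omega>)} \<in> sets ?M"
      by (rule bridge(1)[of "{a<..b}"]) (auto intro: dep_conj_const dep_Zev)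
    then show ?thesis by (simp add: E_def p)
  qed
  have Emeas: "measure ?M (E (a, b)) \<le> (if int m < b - a then Chk ?d * real (nat (b - a)) powr (- (real ?d / 2)) else 0)" for a b
  proof -
    have Eab: "E (a, b) = {\<omega> \<in> space ?M. int m < b - a \<and> Zev a b (Dstep \<omega>)}" by (simp add: E_def)
    have "measure ?M (E (a, b)) = measure_pmf.prob (PU {a<..b} :: (int \<Rightarrow> int^'d) pmf) {f. int m < b - a \<and> Zev a b f}"
      unfolding Eab by (rule bridge(2)) (auto intro: dep_conj_const dep_Zev)
    also have "\<dots> \<le> (if int m < b - a then Chk ?d * real (nat (b - a)) powr (- (real ?d / 2)) else 0)"
    proof (cases "int m < b - a")
      case True
      then show ?thesis using prob_Z[of a b] m by simp
    next
      case False
      then show ?thesis by simp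
    qed
    finally show ?thesis .
  qed
  have Fsets: "F R \<in> sets ?M" for R
    unfolding F_def by (rule sets.finite_UN) (auto simp: P_def Esets)
  have Fbound: "measure ?M (F R) \<le> ?B" for R
  proof -
    have "measure ?M (F R) \<le> (\<Sum>p\<in>P R. measure ?M (E p))"
      unfolding F_def by (rule measure_UNION_le) (auto simp: P_def Esets)
    also have "\<dots> \<le> (\<Sum>p\<in>P R. (if int m < snd p - fst p then Chk ?d * real (nat (snd p - fst p)) powr (- (real ?d / 2)) else 0))"
      by (rule sum_mono) (metis Emeas prod.collapse)
    also have "\<dots> = (\<Sum>a\<in>{j - int R..j}. \<Sum>b\<in>{j+1..j + int R}. (\<lambda>l. if m < l then Chk ?d * real l powr (- (real ?d / 2)) else 0) (nat (b - a)))"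
      unfolding P_def by (simp add: sum.cartesian_product case_prod_beta) (rule sum.cong; auto)
    also have "\<dots> \<le> (\<Sum>l\<in>{1..2*R}. real l * (if m < l then Chk ?d * real l powr (- (real ?d / 2)) else 0))"
      by (rule pair_count) (use Chk_pos[of ?d] in auto)
    also have "\<dots> \<le> ?B" by (rule far_sum_bound[OF d5 m])
    finally show ?thesis .
  qed
  have Un: "{\<omega> \<in> space ?M. \<exists>a b. a \<le> j \<and> j < b \<and> int m < b - a \<and> Zev a b (Dstep \<omega>)} = (\<Union>R. F R)"
  proof (intro set_eqI iffI)
    fix \<omega> assume "\<omega> \<in> {\<omega> \<in> space ?M. \<exists>a b. a \<le> j \<and> j < b \<and> int m < b - a \<and> Zev a b (Dstep \<omega>)}"
    then obtain a b where ab: "a \<le> j" "j < b" "int m < b - a" "Zev a b (Dstep \<omega>)" by auto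
    let ?R = "nat (b - a)"
    have "(a, b) \<in> P ?R" using ab by (auto simp: P_def)
    moreover have "\<omega> \<in> E (a, b)" using ab by (simp add: E_def)
    ultimately show "\<omega> \<in> (\<Union>R. F R)" by (auto simp: F_def)
  next
    fix \<omega> assume "\<omega> \<in> (\<Union>R. F R)"
    then obtain R a b where p: "(a, b) \<in> P R" "\<omega> \<in> E (a, b)" by (auto simp: F_def)
    then have "a \<le> j" "j < b" "int m < b - a" "Zev a b (Dstep \<omega>)" by (auto simp: P_def E_def)
    then show "\<omega> \<in> {\<omega> \<in> space ?M. \<exists>a b. a \<le> j \<and> j < b \<and> int m < b - a \<and> Zev a b (Dstep \<omega>)}"
      by auto
  qed
  show "{\<omega> \<in> space ?M. \<exists>a b. a \<le> j \<and> j < b \<and> int m < b - a \<and> Zev a b (Dstep \<omega>)} \<in> sets ?M"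
    unfolding Un using Fsets by auto
  interpret prob_space ?M by (rule prob_space_two)
  have inc: "incseq F"
  proof (rule incseq_SucI)
    fix R
    have "P R \<subseteq> P (Suc R)" by (auto simp: P_def)
    then show "F R \<subseteq> F (Suc R)" by (auto simp: F_def)
  qed
  have "(\<lambda>R. measure ?M (F R)) \<longlonglongrightarrow> measure ?M (\<Union>R. F R)"
    by (rule finite_Lim_measure_incseq) (use Fsets inc in auto)
  then have "measure ?M (\<Union>R. F R) \<le> ?B"
    by (rule LIMSEQ_le_const2) (use Fbound in auto)
  then show "measure ?M {\<omega> \<in> space ?M. \<exists>a b. a \<le> j \<and> j < b \<and> int m < b - a \<and> Zev a b (Dstep \<omega>)} \<le> ?B"
    unfolding Un .
qed

lemma dep_neg: "dep J P \<Longrightarrow> dep J (\<lambda>f. \<not> P f)"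
  unfolding dep_def by blast

lemma dep_imp_const: "dep J P \<Longrightarrow> dep J (\<lambda>f. Q \<longrightarrow> P f)"
  unfolding dep_def by blast

definition ctr :: "nat \<Rightarrow> nat \<Rightarrow> int" where "ctr m k = int m + 2 * int m * int k"

lemma win_disj:
  assumes m: "m \<ge> 1"
  shows "disjoint_family_on (\<lambda>k. {ctr m k - int m<..ctr m k + int m}) I"
  unfolding disjoint_family_on_def
proof (intro ballI impI)
  fix k k' assume "k \<in> I" "k' \<in> I" "k \<noteq> k'"
  show "{ctr m k - int m<..ctr m k + int m} \<inter> {ctr m k' - int m<..ctr m k' + int m} = {}"
  proof (rule ccontr)
    assume "{ctr m k - int m<..ctr m k + int m} \<inter> {ctr m k' - int m<..ctr m k' + int m} \<noteq> {}"
    then obtain t where "t \<in> {ctr m k - int m<..ctr m k + int m} \<inter> {ctr m k' - int m<..ctr m k' + int m}"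
      by blast
    then have t: "int m * (2 * int k) < t" "t \<le> int m * (2 * int k + 2)"
      "int m * (2 * int k') < t" "t \<le> int m * (2 * int k' + 2)"
      by (auto simp: ctr_def algebra_simps)
    have mp: "int m > 0" using m by simp
    have "int m * (2 * int k) < int m * (2 * int k' + 2)" using t by linarith
    then have "2 * int k < 2 * int k' + 2" using mp by (simp add: mult_less_cancel_left_pos)
    moreover have "int m * (2 * int k') < int m * (2 * int k + 2)" using t by linarith
    then have "2 * int k' < 2 * int k + 2" using mp by (simp add: mult_less_cancel_left_pos)
    ultimately have "k = k'" by linarith
    then show False using \<open>k \<noteq> k'\<close> by simp
  qed
qed

lemma blocks:
  fixes m K :: nat and c0 :: real
  assumes m: "m \<ge> 1"
    and hc0: "\<And>j. measure_pmf.prob (PU {j - int m<..j + int m} :: (int \<Rightarrow> int^'d) pmf) {f. Mev m j f} \<ge> c0"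
  shows "{\<omega> \<in> space TW. \<forall>k\<in>{..<K}. \<not> Mev m (ctr m k) (Dstep \<omega>)} \<in> sets (TW :: ((nat \<Rightarrow> int^'d) \<times> (nat \<Rightarrow> int^'d)) measure)"
    and "measure (TW :: ((nat \<Rightarrow> int^'d) \<times> (nat \<Rightarrow> int^'d)) measure)
           {\<omega> \<in> space TW. \<forall>k\<in>{..<K}. \<not> Mev m (ctr m k) (Dstep \<omega>)} \<le> (1 - c0) ^ K"
proof -
  let ?W = "\<lambda>k. {ctr m k - int m<..ctr m k + int m}"
  have dp: "dep (\<Union>k\<in>{..<K}. ?W k) (\<lambda>f::int \<Rightarrow> int^'d. \<forall>k\<in>{..<K}. \<not> Mev m (ctr m k) f)"
    by (rule dep_Ball) (rule dep_neg[OF dep_Mev])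
  have fin: "finite (\<Union>k\<in>{..<K}. ?W k)" by auto
  show "{\<omega> \<in> space TW. \<forall>k\<in>{..<K}. \<not> Mev m (ctr m k) (Dstep \<omega>)} \<in> sets (TW :: ((nat \<Rightarrow> int^'d) \<times> (nat \<Rightarrow> int^'d)) measure)"
    by (rule bridge(1)[OF fin dp])
  have "measure (TW :: ((nat \<Rightarrow> int^'d) \<times> (nat \<Rightarrow> int^'d)) measure)
           {\<omega> \<in> space TW. \<forall>k\<in>{..<K}. \<not> Mev m (ctr m k) (Dstep \<omega>)}
      = measure_pmf.prob (PU (\<Union>k\<in>{..<K}. ?W k) :: (int \<Rightarrow> int^'d) pmf) {f. \<forall>k\<in>{..<K}. \<not> Mev m (ctr m k) f}"
    by (rule bridge(2)[OF fin dp])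
  also have "\<dots> = (\<Prod>k\<in>{..<K}. measure_pmf.prob (PU (?W k) :: (int \<Rightarrow> int^'d) pmf) {f. \<not> Mev m (ctr m k) f})"
    by (rule prob_Pi_pmf_indep_family) (auto intro: win_disj[OF m] dep_neg[OF dep_Mev])
  also have "\<dots> \<le> (\<Prod>k\<in>{..<K}. 1 - c0)"
  proof (rule prod_mono, rule conjI)
    fix k
    show "0 \<le> measure_pmf.prob (PU (?W k) :: (int \<Rightarrow> int^'d) pmf) {f. \<not> Mev m (ctr m k) f}" by simp
    have "{f. \<not> Mev m (ctr m k) f} = space (measure_pmf (PU (?W k) :: (int \<Rightarrow> int^'d) pmf)) - {f. Mev m (ctr m k) f}"
      by auto
    then have "measure_pmf.prob (PU (?W k) :: (int \<Rightarrow> int^'d) pmf) {f. \<not> Mev m (ctr m k) f}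
        = 1 - measure_pmf.prob (PU (?W k) :: (int \<Rightarrow> int^'d) pmf) {f. Mev m (ctr m k) f}"
      using measure_pmf.prob_compl[of "{f. Mev m (ctr m k) f}" "PU (?W k) :: (int \<Rightarrow> int^'d) pmf"] by simp
    then show "measure_pmf.prob (PU (?W k) :: (int \<Rightarrow> int^'d) pmf) {f. \<not> Mev m (ctr m k) f} \<le> 1 - c0"
      using hc0[of "ctr m k"] by simp
  qed
  also have "\<dots> = (1 - c0) ^ K" by simp
  finally show "measure (TW :: ((nat \<Rightarrow> int^'d) \<times> (nat \<Rightarrow> int^'d)) measure)
           {\<omega> \<in> space TW. \<forall>k\<in>{..<K}. \<not> Mev m (ctr m k) (Dstep \<omega>)} \<le> (1 - c0) ^ K" .
qed

lemma T_sets: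
  "{\<omega> \<in> space TW. \<exists>j \<in> {1 .. int N}. two_sided \<omega> ` {.. j} \<inter> two_sided \<omega> ` {j + 1 ..} = {}}
     \<in> sets (TW :: ((nat \<Rightarrow> int^'d) \<times> (nat \<Rightarrow> int^'d)) measure)"
proof -
  let ?M = "TW :: ((nat \<Rightarrow> int^'d) \<times> (nat \<Rightarrow> int^'d)) measure"
  have eq: "{\<omega> \<in> space ?M. \<exists>j \<in> {1 .. int N}. two_sided \<omega> ` {.. j} \<inter> two_sided \<omega> ` {j + 1 ..} = {}}
      = {\<omega> \<in> space ?M. \<exists>j \<in> {1 .. int N}. \<forall>a. \<forall>b. a \<le> j \<longrightarrow> j < b \<longrightarrow> \<not> Zev a b (Dstep \<omega>)}"
    by (simp add: disj_iff Zev_def)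
  show ?thesis unfolding eq
  proof (rule sets.sets_Collect_finite_Ex)
    fix j
    show "{\<omega> \<in> space ?M. \<forall>a b. a \<le> j \<longrightarrow> j < b \<longrightarrow> \<not> Zev a b (Dstep \<omega>)} \<in> sets ?M"
    proof (rule sets.sets_Collect_countable_All, rule sets.sets_Collect_countable_All)
      fix a b
      show "{\<omega> \<in> space ?M. a \<le> j \<longrightarrow> j < b \<longrightarrow> \<not> Zev a b (Dstep \<omega>)} \<in> sets ?M"
        by (rule bridge(1)[of "{a<..b}"]) (auto intro!: dep_imp_const dep_neg dep_Zev)
    qed
  qed simp
qed

lemma fail_bound:
  fixes m K N :: nat and c0 :: real
  assumes d5: "CARD('d) \<ge> 5" and m: "m \<ge> 1" and K: "K \<ge> 1" and N: "2 * m * K \<le> N"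
    and hc0: "\<And>j. measure_pmf.prob (PU {j - int m<..j + int m} :: (int \<Rightarrow> int^'d) pmf) {f. Mev m j f} \<ge> c0"
  shows "measure (TW :: ((nat \<Rightarrow> int^'d) \<times> (nat \<Rightarrow> int^'d)) measure)
           {\<omega> \<in> space TW. \<exists>j \<in> {1 .. int N}. two_sided \<omega> ` {.. j} \<inter> two_sided \<omega> ` {j + 1 ..} = {}}
     \<ge> 1 - (1 - c0)^K - real K * (Chk CARD('d) * (real m powr (2 - real CARD('d) / 2) / (real CARD('d) / 2 - 2)))"
proof -
  let ?M = "TW :: ((nat \<Rightarrow> int^'d) \<times> (nat \<Rightarrow> int^'d)) measure"
  let ?B = "Chk CARD('d) * (real m powr (2 - real CARD('d) / 2) / (real CARD('d) / 2 - 2))"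
  let ?T = "{\<omega> \<in> space ?M. \<exists>j \<in> {1 .. int N}. two_sided \<omega> ` {.. j} \<inter> two_sided \<omega> ` {j + 1 ..} = {}}"
  let ?F1 = "{\<omega> \<in> space ?M. \<forall>k\<in>{..<K}. \<not> Mev m (ctr m k) (Dstep \<omega>)}"
  let ?Far = "\<lambda>j. {\<omega> \<in> space ?M. \<exists>a b. a \<le> j \<and> j < b \<and> int m < b - a \<and> Zev a b (Dstep \<omega>)}"
  let ?F2 = "\<Union>k\<in>{..<K}. ?Far (ctr m k)"
  interpret prob_space ?M by (rule prob_space_two)
  have Tsets: "?T \<in> sets ?M" by (rule T_sets)
  have F1sets: "?F1 \<in> sets ?M" by (rule blocks(1)[OF m hc0])
  have Farsets: "?Far j \<in> sets ?M" for j by (rule far_bound(1)[OF d5 m])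
  have F2sets: "?F2 \<in> sets ?M" using Farsets by auto
  have cov: "space ?M - ?T \<subseteq> ?F1 \<union> ?F2"
  proof
    fix \<omega> assume \<omega>: "\<omega> \<in> space ?M - ?T"
    show "\<omega> \<in> ?F1 \<union> ?F2"
    proof (cases "\<omega> \<in> ?F2")
      case True
      then show ?thesis by simp
    next
      case False
      have "\<not> Mev m (ctr m k) (Dstep \<omega>)" if k: "k \<in> {..<K}" for k
      proof
        assume Mv: "Mev m (ctr m k) (Dstep \<omega>)"
        let ?j = "ctr m k"
        have j1: "?j \<in> {1 .. int N}"
        proof -
          have "2 * int m * int k \<ge> 0" by simp
          then have "?j \<ge> 1" using m unfolding ctr_def by linarith
          moreover have "int m + 2 * int m * int k \<le> int N"
          proof -
            have "k + 1 \<le> K" using k by simp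
            then have "2 * m * (k + 1) \<le> 2 * m * K" by (intro mult_left_mono) auto
            then have "m + 2 * m * k \<le> N" using N by (simp add: algebra_simps)
            then have "int (m + 2 * m * k) \<le> int N" by (simp only: of_nat_le_iff)
            then show ?thesis by simp
          qed
          ultimately show ?thesis by (simp add: ctr_def)
        qed
        then have "\<not> (two_sided \<omega> ` {.. ?j} \<inter> two_sided \<omega> ` {?j + 1 ..} = {})" using \<omega> by auto
        then obtain a b where ab: "a \<le> ?j" "?j < b" "Zev a b (Dstep \<omega>)"
          by (auto simp: disj_iff Zev_def)
        show False
        proof (cases "int m < b - a")
          case True
          then have "\<omega> \<in> ?Far ?j" using ab by auto
          then show False using False k by auto
        next
          case False
          then have "a \<in> {?j - int m..?j}" "b \<in> {?j + 1..?j + int m}" using ab by auto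
          then show False using Mv ab by (auto simp: Mev_def)
        qed
      qed
      then show ?thesis using \<omega> by auto
    qed
  qed
  have "measure ?M (space ?M - ?T) \<le> measure ?M (?F1 \<union> ?F2)"
    by (rule finite_measure_mono[OF cov]) (use F1sets F2sets in auto)
  also have "\<dots> \<le> measure ?M ?F1 + measure ?M ?F2"
    by (rule measure_Un_le[OF F1sets F2sets])
  also have "measure ?M ?F2 \<le> (\<Sum>k\<in>{..<K}. measure ?M (?Far (ctr m k)))"
    by (rule measure_UNION_le) (use Farsets in auto)
  also have "\<dots> \<le> (\<Sum>k\<in>{..<K}. ?B)"
    by (rule sum_mono) (rule far_bound(2)[OF d5 m])
  also have "\<dots> = real K * ?B" by simp
  also have "measure ?M ?F1 \<le> (1 - c0)^K" by (rule blocks(2)[OF m hc0])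
  finally have "measure ?M (space ?M - ?T) \<le> (1 - c0)^K + real K * ?B" by simp
  moreover have "measure ?M (space ?M - ?T) = 1 - measure ?M ?T" by (rule prob_compl[OF Tsets])
  ultimately show ?thesis by simp
qed

lemma R1:
  fixes c0 \<beta> dd :: real and K N :: nat
  assumes c0: "0 < c0" "c0 \<le> 1" and beta: "\<beta> = (dd - 4) / (2 * c0)" and K: "real K \<ge> \<beta> * ln (real N)"
    and N: "N \<ge> 1"
  shows "(1 - c0) ^ K \<le> real N powr ((4 - dd) / 2)"
proof -
  have "(1 - c0) ^ K \<le> exp (- c0) ^ K"
    by (rule power_mono) (use exp_ge_add_one_self[of "- c0"] c0 in auto)
  also have "\<dots> = exp (real K * (- c0))" by (metis exp_of_nat_mult)
  also have "\<dots> \<le> exp (\<beta> * ln (real N) * (- c0))"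
    using K c0 by (intro exp_le_cancel_iff[THEN iffD2] mult_right_mono_neg) auto
  also have "\<beta> * ln (real N) * (- c0) = (4 - dd) / 2 * ln (real N)"
    using c0 by (simp add: beta field_simps)
  also have "exp ((4 - dd) / 2 * ln (real N)) = real N powr ((4 - dd) / 2)"
    using N by (simp add: powr_def)
  finally show ?thesis .
qed

lemma R2:
  fixes dd :: real and m K N :: nat
  assumes dd: "dd \<ge> 4" and m: "m \<ge> 1" and K: "K \<ge> 1" and N: "N \<ge> 1" and mK: "real N \<le> 4 * real K * real m"
  shows "real K * real m powr (2 - dd / 2) \<le> 4 powr (dd / 2 - 2) * real K powr (dd / 2 - 1) * real N powr (2 - dd / 2)"
proof -
  have pos: "real N / (4 * real K) > 0" using N K by simp
  have le: "real N / (4 * real K) \<le> real m" using mK K by (simp add: field_simps)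
  have "real m powr (2 - dd / 2) \<le> (real N / (4 * real K)) powr (2 - dd / 2)"
    by (rule powr_mono2') (use dd pos le in auto)
  also have "\<dots> = real N powr (2 - dd / 2) / (4 * real K) powr (2 - dd / 2)"
    by (rule powr_divide)
  also have "\<dots> = real N powr (2 - dd / 2) * (4 * real K) powr (dd / 2 - 2)"
  proof -
    have eq: "(4 * real K) powr (dd / 2 - 2) = 1 / (4 * real K) powr (2 - dd / 2)"
      using powr_minus_divide[of "4 * real K" "2 - dd / 2"] by simp
    show ?thesis unfolding eq by simp
  qed
  also have "(4 * real K) powr (dd / 2 - 2) = 4 powr (dd / 2 - 2) * real K powr (dd / 2 - 2)"
    by (simp add: powr_mult)
  finally have a: "real m powr (2 - dd / 2) \<le> real N powr (2 - dd / 2) * (4 powr (dd / 2 - 2) * real K powr (dd / 2 - 2))" .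
  have "real K * real m powr (2 - dd / 2) \<le> real K * (real N powr (2 - dd / 2) * (4 powr (dd / 2 - 2) * real K powr (dd / 2 - 2)))"
    using a by (intro mult_left_mono) auto
  also have "\<dots> = 4 powr (dd / 2 - 2) * (real K * real K powr (dd / 2 - 2)) * real N powr (2 - dd / 2)"
    by (simp add: algebra_simps)
  also have "real K * real K powr (dd / 2 - 2) = real K powr (dd / 2 - 1)"
    using powr_mult_base[of "real K" "dd / 2 - 2"] by simp
  finally show ?thesis .
qed

lemma R3:
  fixes \<beta> :: real and N :: nat
  assumes beta: "\<beta> > 0" and N: "N \<ge> 2"
  shows "nat \<lceil>\<beta> * ln (real N)\<rceil> \<ge> 1"
    and "real (nat \<lceil>\<beta> * ln (real N)\<rceil>) \<ge> \<beta> * ln (real N)"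
    and "real (nat \<lceil>\<beta> * ln (real N)\<rceil>) \<le> (\<beta> + 1 / ln 2) * ln (real N)"
    and "real (nat \<lceil>\<beta> * ln (real N)\<rceil>) \<le> \<beta> * ln (real N) + 1"
proof -
  have lnN: "ln (real N) \<ge> ln 2" using N by simp
  have ln2: "ln (2::real) > 0" by simp
  have "ln (real N) > 0" using lnN ln2 by linarith
  then have pos: "\<beta> * ln (real N) > 0" using beta by simp
  have c: "real (nat \<lceil>\<beta> * ln (real N)\<rceil>) = real_of_int \<lceil>\<beta> * ln (real N)\<rceil>" using pos by simp
  have "real_of_int \<lceil>\<beta> * ln (real N)\<rceil> > 0" using pos le_of_int_ceiling by (metis order_less_le_trans)
  then have "\<lceil>\<beta> * ln (real N)\<rceil> \<ge> 1" by simp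
  then show "nat \<lceil>\<beta> * ln (real N)\<rceil> \<ge> 1" by linarith
  show "real (nat \<lceil>\<beta> * ln (real N)\<rceil>) \<ge> \<beta> * ln (real N)" unfolding c by linarith
  show "real (nat \<lceil>\<beta> * ln (real N)\<rceil>) \<le> \<beta> * ln (real N) + 1" unfolding c by linarith
  have "real (nat \<lceil>\<beta> * ln (real N)\<rceil>) \<le> \<beta> * ln (real N) + 1" unfolding c by linarith
  also have "1 \<le> 1 / ln 2 * ln (real N)" using lnN ln2 by (simp add: field_simps)
  finally show "real (nat \<lceil>\<beta> * ln (real N)\<rceil>) \<le> (\<beta> + 1 / ln 2) * ln (real N)"
    by (simp add: algebra_simps)
qed

lemma R4: "x > 0 \<Longrightarrow> ln x \<le> 2 * sqrt x"
proof -
  assume x: "x > 0"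
  have "ln (sqrt x) \<le> sqrt x - 1" using x by (intro ln_le_minus_one) simp
  then show ?thesis using x by (simp add: ln_sqrt)
qed

theorem mainTheorem4:
  assumes "CARD('d) \<ge> 5"
  shows "\<exists>\<xi> C :: real. 0 < \<xi> \<and> 0 < C \<and>
    (\<forall>N :: nat. N \<ge> 2 \<longrightarrow>
      measure (two_walk_space :: ((nat \<Rightarrow> int ^ 'd) \<times> (nat \<Rightarrow> int ^ 'd)) measure)
        {\<omega> \<in> space two_walk_space. \<exists>j \<in> {1 .. int N}.
           two_sided \<omega> ` {.. j} \<inter> two_sided \<omega> ` {j + 1 ..} = {}}
      \<ge> 1 - C * ln (real N) powr \<xi> * real N powr ((4 - real CARD('d)) / 2))"
proof -
  let ?d = "CARD('d)"
  let ?M = "two_walk_space :: ((nat \<Rightarrow> int ^ 'd) \<times> (nat \<Rightarrow> int ^ 'd)) measure"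
  define dd where "dd = real ?d"
  have d5: "?d \<ge> 5" by (rule assms)
  have dd5: "dd \<ge> 5" using d5 by (simp add: dd_def)
  obtain L :: nat where L1: "L \<ge> 1"
    and LB: "Chk ?d * 2 powr (real ?d / 2) * (real (2*L - 1) powr (2 - real ?d / 2) / (real ?d / 2 - 2)) \<le> 1/2"
    using exists_L[OF d5] by blast
  define c where "c = (1 / (2 * real ?d)) ^ (2 * L)"
  define c0 where "c0 = c / 2"
  have cpos: "c > 0" by (simp add: c_def)
  have c1: "c \<le> 1" unfolding c_def by (rule power_le_one) (use d5 in auto)
  have c0: "0 < c0" "c0 \<le> 1" using cpos c1 by (auto simp: c0_def)
  have hc0: "measure_pmf.prob (PU {j - int m<..j + int m} :: (int \<Rightarrow> int^'d) pmf) {f. Mev m j f} \<ge> c0"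
    if mL: "L \<le> m" for m j
  proof -
    have "c * (1 - Chk ?d * 2 powr (real ?d / 2) * (real (2*L - 1) powr (2 - real ?d / 2) / (real ?d / 2 - 2)))
          \<le> measure_pmf.prob (PU {j - int m<..j + int m} :: (int \<Rightarrow> int^'d) pmf) {f. Mev m j f}"
      unfolding c_def by (rule local_lower[OF d5 L1 mL])
    moreover have "c0 \<le> c * (1 - Chk ?d * 2 powr (real ?d / 2) * (real (2*L - 1) powr (2 - real ?d / 2) / (real ?d / 2 - 2)))"
    proof -
      have "1/2 \<le> 1 - Chk ?d * 2 powr (real ?d / 2) * (real (2*L - 1) powr (2 - real ?d / 2) / (real ?d / 2 - 2))"
        using LB by linarith
      then have "c * (1/2) \<le> c * (1 - Chk ?d * 2 powr (real ?d / 2) * (real (2*L - 1) powr (2 - real ?d / 2) / (real ?d / 2 - 2)))"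
        using cpos by (intro mult_left_mono) auto
      then show ?thesis by (simp add: c0_def)
    qed
    ultimately show ?thesis by linarith
  qed
  define \<beta> where "\<beta> = (dd - 4) / (2 * c0)"
  have beta: "\<beta> > 0" using dd5 c0 by (simp add: \<beta>_def)
  define \<xi> where "\<xi> = dd / 2 - 1"
  have xi: "\<xi> > 0" using dd5 by (simp add: \<xi>_def)
  define A where "A = (4 * \<beta> + 2) * real L"
  have Apos: "A > 0" using beta L1 by (simp add: A_def)
  have ln2: "ln (2::real) > 0" by simp
  define C1 where "C1 = (1 / ln 2) powr \<xi> + Chk ?d / (dd / 2 - 2) * 4 powr (dd / 2 - 2) * (\<beta> + 1 / ln 2) powr \<xi>"
  define C2 where "C2 = (A^2) powr ((dd - 4) / 2) / (ln 2) powr \<xi>"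
  have Chkpos: "Chk ?d > 0" using Chk_pos[of ?d] d5 by simp
  have C1pos: "C1 > 0" unfolding C1_def using ln2 dd5 Chkpos beta
    by (intro add_pos_nonneg) auto
  have C2pos: "C2 > 0" unfolding C2_def using Apos ln2 by simp
  show ?thesis
  proof (rule exI[of _ \<xi>], rule exI[of _ "C1 + C2"], intro conjI allI impI)
    show "0 < \<xi>" by (rule xi)
    show "0 < C1 + C2" using C1pos C2pos by simp
    fix N :: nat assume N: "N \<ge> 2"
    let ?T = "{\<omega> \<in> space ?M. \<exists>j \<in> {1 .. int N}. two_sided \<omega> ` {.. j} \<inter> two_sided \<omega> ` {j + 1 ..} = {}}"
    let ?R = "ln (real N) powr \<xi> * real N powr ((4 - real ?d) / 2)"
    have lnN: "ln (real N) \<ge> ln 2" using N by simp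
    have lnNpos: "ln (real N) > 0" using lnN ln2 by linarith
    have Rnn: "?R \<ge> 0" by simp
    define K where "K = nat \<lceil>\<beta> * ln (real N)\<rceil>"
    define m where "m = N div (2 * K)"
    have K1: "K \<ge> 1" unfolding K_def by (rule R3(1)[OF beta N])
    have Kge: "real K \<ge> \<beta> * ln (real N)" unfolding K_def by (rule R3(2)[OF beta N])
    have Kle: "real K \<le> (\<beta> + 1 / ln 2) * ln (real N)" unfolding K_def by (rule R3(3)[OF beta N])
    have Kle': "real K \<le> \<beta> * ln (real N) + 1" unfolding K_def by (rule R3(4)[OF beta N])
    have Nlt: "N < 2 * K * (m + 1)"
    proof -
      have "N = N div (2 * K) * (2 * K) + N mod (2 * K)" using div_mult_mod_eq[of N "2 * K"] by linarith
      moreover have "N mod (2 * K) < 2 * K" using K1 by simp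
      ultimately show ?thesis unfolding m_def by (simp add: algebra_simps)
    qed
    have main: "measure ?M ?T \<ge> 1 - (C1 + C2) * ?R"
    proof (cases "L \<le> m")
      case True
      have m1: "m \<ge> 1" using L1 True by simp
      have "N div (2 * K) * (2 * K) \<le> N" by (rule div_times_less_eq_dividend)
      then have N2mK: "2 * m * K \<le> N" unfolding m_def by (simp add: ac_simps)
      have fb: "measure ?M ?T \<ge> 1 - (1 - c0)^K - real K * (Chk ?d * (real m powr (2 - real ?d / 2) / (real ?d / 2 - 2)))"
        by (rule fail_bound[OF d5 m1 K1 N2mK hc0[OF True]])
      have e1: "(1 - c0)^K \<le> real N powr ((4 - dd) / 2)"
        by (rule R1[OF c0 \<beta>_def Kge]) (use N in simp)
      have N4: "real N \<le> 4 * real K * real m"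
      proof -
        have "N < 2 * K * (m + 1)" by (rule Nlt)
        also have "2 * K * (m + 1) \<le> 4 * K * m" using m1 by simp
        finally have "N < 4 * K * m" .
        then have "real N < real (4 * K * m)" by (simp only: of_nat_less_iff)
        then show ?thesis by simp
      qed
      have e2: "real K * real m powr (2 - dd / 2) \<le> 4 powr (dd / 2 - 2) * real K powr (dd / 2 - 1) * real N powr (2 - dd / 2)"
        by (rule R2) (use dd5 m1 K1 N N4 in auto)
      have e3: "real K powr \<xi> \<le> (\<beta> + 1 / ln 2) powr \<xi> * ln (real N) powr \<xi>"
      proof -
        have "real K powr \<xi> \<le> ((\<beta> + 1 / ln 2) * ln (real N)) powr \<xi>"
          by (rule powr_mono2) (use xi Kle in auto)
        also have "\<dots> = (\<beta> + 1 / ln 2) powr \<xi> * ln (real N) powr \<xi>"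
          by (rule powr_mult)
        finally show ?thesis .
      qed
      have e4: "1 \<le> (1 / ln 2) powr \<xi> * ln (real N) powr \<xi>"
      proof -
        have "1 \<le> 1 / ln 2 * ln (real N)" using lnN ln2 by (simp add: field_simps)
        then have "1 \<le> (1 / ln 2 * ln (real N)) powr \<xi>" using xi by (intro ge_one_powr_ge_zero) auto
        also have "\<dots> = (1 / ln 2) powr \<xi> * ln (real N) powr \<xi>"
          by (rule powr_mult)
        finally show ?thesis .
      qed
      have ex: "(4 - dd) / 2 = 2 - dd / 2" by simp
      have xi': "dd / 2 - 1 = \<xi>" by (simp add: \<xi>_def)
      let ?P = "real N powr (2 - dd / 2)"
      have Ppos: "?P \<ge> 0" by simp
      have Q: "real K * (Chk ?d * (real m powr (2 - dd / 2) / (dd / 2 - 2)))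
             = Chk ?d / (dd / 2 - 2) * (real K * real m powr (2 - dd / 2))"
        by (simp add: field_simps)
      have "(1 - c0)^K + real K * (Chk ?d * (real m powr (2 - dd / 2) / (dd / 2 - 2)))
            \<le> ?P + Chk ?d / (dd / 2 - 2) * (4 powr (dd / 2 - 2) * real K powr \<xi> * ?P)"
        unfolding Q using e1 e2 dd5 Chkpos by (intro add_mono mult_left_mono) (auto simp: ex xi')
      also have "\<dots> \<le> ((1 / ln 2) powr \<xi> * ln (real N) powr \<xi>) * ?P
                    + Chk ?d / (dd / 2 - 2) * (4 powr (dd / 2 - 2) * ((\<beta> + 1 / ln 2) powr \<xi> * ln (real N) powr \<xi>) * ?P)"
        using e3 e4 Ppos dd5 Chkpos
        by (intro add_mono mult_left_mono mult_right_mono) (auto simp: mult_le_cancel_right1)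
      also have "\<dots> = C1 * (ln (real N) powr \<xi> * ?P)"
        by (simp add: C1_def algebra_simps)
      also have "\<dots> \<le> (C1 + C2) * (ln (real N) powr \<xi> * ?P)"
        using C2pos by (intro mult_right_mono) auto
      finally have bnd: "(1 - c0)^K + real K * (Chk ?d * (real m powr (2 - dd / 2) / (dd / 2 - 2)))
            \<le> (C1 + C2) * (ln (real N) powr \<xi> * ?P)" .
      have Peq: "real N powr ((4 - real ?d) / 2) = real N powr (2 - dd / 2)"
        by (simp add: dd_def diff_divide_distrib)
      show ?thesis unfolding Peq using fb bnd[unfolded dd_def] unfolding dd_def by linarith
    next
      case False
      then have mL: "m + 1 \<le> L" by simp
      have "real N < 2 * real K * real L"
      proof -
        have "N < 2 * K * (m + 1)" by (rule Nlt)
        also have "\<dots> \<le> 2 * K * L" using mL by (intro mult_left_mono) auto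
        finally have "N < 2 * K * L" .
        then have "real N < real (2 * K * L)" by (simp only: of_nat_less_iff)
        then show ?thesis by simp
      qed
      also have "\<dots> \<le> 2 * (\<beta> * ln (real N) + 1) * real L"
        using Kle' by (intro mult_right_mono) auto
      also have "\<dots> \<le> 2 * (\<beta> * (2 * sqrt (real N)) + 1) * real L"
        using R4[of "real N"] N beta by (intro mult_right_mono mult_left_mono add_right_mono) auto
      also have "\<dots> \<le> 2 * (\<beta> * (2 * sqrt (real N)) + sqrt (real N)) * real L"
        using N by (intro mult_right_mono mult_left_mono add_left_mono) auto
      also have "\<dots> = A * sqrt (real N)" by (simp add: A_def algebra_simps)
      finally have X: "real N < A * sqrt (real N)" .
      have pos: "sqrt (real N) > 0" using N by simp
      have "sqrt (real N) * sqrt (real N) < A * sqrt (real N)"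
        using X by (metis abs_of_nat real_sqrt_mult_self)
      then have sA: "sqrt (real N) < A" using mult_less_cancel_right_pos[OF pos, of "sqrt (real N)" A] by blast
      have "real N = sqrt (real N) ^ 2" by simp
      also have "\<dots> < A ^ 2" by (rule power_strict_mono[OF sA]) auto
      finally have NA: "real N < A^2" .
      have r1: "ln (real N) powr \<xi> \<ge> ln 2 powr \<xi>"
        by (rule powr_mono2) (use xi lnN ln2 in auto)
      have r2: "real N powr ((4 - real ?d) / 2) \<ge> (A^2) powr ((4 - real ?d) / 2)"
        by (rule powr_mono2') (use d5 NA N in auto)
      have "C2 * ?R \<ge> C2 * (ln 2 powr \<xi> * (A^2) powr ((4 - real ?d) / 2))"
        using r1 r2 C2pos by (intro mult_left_mono mult_mono) auto
      also have "C2 * (ln 2 powr \<xi> * (A^2) powr ((4 - real ?d) / 2)) = 1"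
      proof -
        have e0: "(dd - 4) / 2 + (4 - dd) / 2 = 0" by (simp add: field_simps)
        have "(A^2) powr ((dd - 4) / 2) * (A^2) powr ((4 - dd) / 2) = (A^2) powr ((dd - 4) / 2 + (4 - dd) / 2)"
          by (simp add: powr_add)
        also have "\<dots> = 1" unfolding e0 using Apos by simp
        finally have "(A^2) powr ((dd - 4) / 2) * (A^2) powr ((4 - dd) / 2) = 1" .
        then show ?thesis using ln2 by (simp add: C2_def dd_def field_simps)
      qed
      finally have "C2 * ?R \<ge> 1" .
      then have "(C1 + C2) * ?R \<ge> 1" using C1pos Rnn by (smt (verit) mult_right_mono)
      moreover have "measure ?M ?T \<ge> 0" by simp
      ultimately show ?thesis by linarith
    qed
    then show "measure ?M ?T \<ge> 1 - (C1 + C2) * ln (real N) powr \<xi> * real N powr ((4 - real ?d) / 2)"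
      by (simp add: mult.assoc)
  qed
qed

end
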